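(* For every $r>0$ there exists a finite constant $C_0=C_0(r)$ such that $$Q_\varepsilon(z)\le-\frac1{2\pi}\ln(\|z\|+\varepsilon)+C_0$$ for all $0<\varepsilon<1$ and all $z\in\mathbb R\times\mathbb T$ with $\|z\|\le r$.
   Context: $\mathbb T=[-1/2,1/2)$; on $\mathbb R\times\mathbb T$, $\|(t,x)\|=|t|+d_{\mathbb T}(x,0)$. Let $\mathbf p(t,x)=\frac1\pi\frac t{x^2+t^2}$ for $t>0$, $0$ for $t\le0$; $p(t,x)=\sum_{k\in\mathbb Z}\mathbf p(t,x+k)$; fix $T_0\ge1$ and a smooth $\mathsf H:\mathbb R\to[0,1]$ equal to $1$ on $(-\infty,0]$, $0$ on $[1,\infty)$; $q(t,x)=p(t,x)\mathsf H(t-T_0)$. $\varrho$ is a nonnegative smooth function on $\mathbb R^2$ with $\varrho(-z)=\varrho(z)$, $\int\varrho=1$, supported in $[-s_0,s_0]\times(-1/4,1/4)$ for some $s_0>0$ (regarded as a function on $\mathbb R\times\mathbb T$); $\varrho_\varepsilon(w)=\varepsilon^{-2}\varrho(w/\varepsilon)$. $Q_\varepsilon(z)=\int_{\mathbb R\times\mathbb T}(q*\varrho_\varepsilon)(w)(q*\varrho_\varepsilon)(z+w)dw$, the covariance $\mathbb E[\mathfrak v_\varepsilon(0)\mathfrak v_\varepsilon(z)]$ of $\mathfrak v_\varepsilon=q*\varrho_\varepsilon*\xi$, $\xi$ space-time white noise. *)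

theory Defs
  imports "HOL-Analysis.Analysis"
begin

text \<open>Space-time R x T with T = [-1/2,1/2) is modelled by real x real, functions on it
  being 1-periodic in the second variable.\<close>

definition dT :: "real \<Rightarrow> real" where
  "dT x = \<bar>x - of_int (round x)\<bar>"

definition tnorm :: "real \<times> real \<Rightarrow> real" where
  "tnorm z = \<bar>fst z\<bar> + dT (snd z)"

definition tint :: "(real \<times> real \<Rightarrow> real) \<Rightarrow> real" where
  "tint f = (LINT w : (UNIV \<times> {-1/2..<1/2}) | lborel. f w)"

definition tconv :: "(real \<times> real \<Rightarrow> real) \<Rightarrow> (real \<times> real \<Rightarrow> real) \<Rightarrow> real \<times> real \<Rightarrow> real" where
  "tconv f g z = tint (\<lambda>w. f w * g (z - w))"

definition pbold :: "real \<Rightarrow> real \<Rightarrow> real" where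
  "pbold t x = (if t > 0 then (1/pi) * (t / (x^2 + t^2)) else 0)"

definition pker :: "real \<times> real \<Rightarrow> real" where
  "pker z = (\<Sum>\<^sub>\<infinity>k::int. pbold (fst z) (snd z + of_int k))"

definition qker :: "real \<Rightarrow> (real \<Rightarrow> real) \<Rightarrow> real \<times> real \<Rightarrow> real" where
  "qker T0 H z = pker z * H (fst z - T0)"

definition rho_eps :: "(real \<times> real \<Rightarrow> real) \<Rightarrow> real \<Rightarrow> real \<times> real \<Rightarrow> real" where
  "rho_eps \<rho> \<epsilon> z = (\<Sum>\<^sub>\<infinity>k::int. \<epsilon> powi (-2) * \<rho> ((1/\<epsilon>) *\<^sub>R (fst z, snd z + of_int k)))"

definition Qeps :: "real \<Rightarrow> (real \<Rightarrow> real) \<Rightarrow> (real \<times> real \<Rightarrow> real) \<Rightarrow> real \<Rightarrow> real \<times> real \<Rightarrow> real" where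
  "Qeps T0 H \<rho> \<epsilon> z =
     (let v = tconv (qker T0 H) (rho_eps \<rho> \<epsilon>) in tint (\<lambda>w. v w * v (z + w)))"

definition smooth1 :: "(real \<Rightarrow> real) \<Rightarrow> bool" where
  "smooth1 f \<longleftrightarrow> (\<forall>n x. (deriv ^^ n) f differentiable (at x))"

fun pdir :: "bool \<Rightarrow> (real \<times> real \<Rightarrow> real) \<Rightarrow> real \<times> real \<Rightarrow> real" where
  "pdir True f = (\<lambda>(t, x). deriv (\<lambda>s. f (s, x)) t)"
| "pdir False f = (\<lambda>(t, x). deriv (\<lambda>y. f (t, y)) x)"

definition iter_pd :: "bool list \<Rightarrow> (real \<times> real \<Rightarrow> real) \<Rightarrow> real \<times> real \<Rightarrow> real" where
  "iter_pd ds f = fold pdir ds f"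

definition smooth2 :: "(real \<times> real \<Rightarrow> real) \<Rightarrow> bool" where
  "smooth2 f \<longleftrightarrow> (\<forall>ds. continuous_on UNIV (iter_pd ds f) \<and>
      (\<forall>t x. (\<lambda>s. iter_pd ds f (s, x)) differentiable (at t) \<and>
             (\<lambda>y. iter_pd ds f (t, y)) differentiable (at x)))"

end

theory Submission
  imports Defs "HOL-Real_Asymp.Real_Asymp"
begin

lemma summable_int_inv_sq: "(\<lambda>k::int. 1 / (1 + (real_of_int k)\<^sup>2)) summable_on UNIV"
proof -
  have sn: "summable (\<lambda>n::nat. norm (1 / (1 + (real n)\<^sup>2)))"
  proof (rule summable_comparison_test'[where g="\<lambda>n. inverse (real (Suc n) ^ 2) * 4" and N=0])
    show "summable (\<lambda>n. inverse (real (Suc n) ^ 2) * 4)"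
      using inverse_power_summable[of 2] by (subst summable_Suc_iff) (auto intro: summable_mult2)
    fix n :: nat
    have "0 \<le> (real n - 1)^2" by simp
    then have "real (Suc n) ^ 2 \<le> 4 * (1 + (real n)\<^sup>2)" by (simp add: power2_eq_square algebra_simps)
    moreover have "0 < real (Suc n) ^ 2" by simp
    moreover have "0 < 1 + (real n)\<^sup>2" by (simp add: add_pos_nonneg)
    ultimately have "1 / (1 + (real n)\<^sup>2) \<le> 4 / real (Suc n) ^ 2"
      by (simp add: divide_simps)
    then show "norm (norm (1 / (1 + (real n)\<^sup>2))) \<le> inverse (real (Suc n) ^ 2) * 4"
      by (simp add: divide_inverse mult.commute)
  qed
  have A: "(\<lambda>k::int. 1 / (1 + (real_of_int k)\<^sup>2)) summable_on (of_nat ` UNIV)"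
    by (subst summable_on_reindex) (auto intro!: norm_summable_imp_summable_on simp: o_def inj_on_def sn[simplified])
  have B: "(\<lambda>k::int. 1 / (1 + (real_of_int k)\<^sup>2)) summable_on ((\<lambda>n. - of_nat n - 1) ` UNIV)"
  proof (subst summable_on_reindex)
    show "inj_on (\<lambda>n::nat. - int n - 1) UNIV" by (auto simp: inj_on_def)
    have "summable (\<lambda>n::nat. norm (1 / (1 + (real (Suc n))\<^sup>2)))"
      using sn by (subst summable_Suc_iff) 
    then show "((\<lambda>k::int. 1 / (1 + (real_of_int k)\<^sup>2)) \<circ> (\<lambda>n. - int n - 1)) summable_on UNIV"
      by (intro norm_summable_imp_summable_on) (simp add: o_def power2_eq_square algebra_simps)
  qed
  have U: "(UNIV::int set) = of_nat ` UNIV \<union> (\<lambda>n. - of_nat n - 1) ` UNIV"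
  proof -
    have "k \<in> of_nat ` UNIV \<union> (\<lambda>n. - of_nat n - 1) ` UNIV" for k :: int
    proof (cases "k \<ge> 0")
      case True then show ?thesis by (auto intro!: image_eqI[where x="nat k"])
    next
      case False then show ?thesis by (auto intro!: image_eqI[where x="nat (- k - 1)"])
    qed
    then show ?thesis by auto
  qed
  show ?thesis
    by (subst U, rule summable_on_Un_disjoint[OF A B]) auto
qed

definition red :: "real \<Rightarrow> real" where "red x = x - real_of_int (round x)"

lemma red_ge: "- 1/2 \<le> red x" and red_lt: "red x < 1/2"
  using of_int_round_le[of x] of_int_round_gt[of x] by (auto simp: red_def)

lemma dT_red: "dT x = \<bar>red x\<bar>" by (simp add: dT_def red_def)

lemma round_add_int: "round (x + real_of_int n) = round x + n"
  unfolding round_def by (metis add.commute add.left_commute floor_add_int)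

lemma red_add_int[simp]: "red (x + real_of_int n) = red x"
  by (simp add: red_def round_add_int)

lemma red_id: "- 1/2 \<le> x \<Longrightarrow> x < 1/2 \<Longrightarrow> red x = x"
  unfolding red_def using round_unique[of x 0] by simp

lemma red_red[simp]: "red (red x) = red x"
  using red_ge red_lt red_id by blast

lemma pbold_nonneg: "0 \<le> pbold t x"
  by (simp add: pbold_def)

lemma pbold_even: "pbold t (- x) = pbold t x"
  by (simp add: pbold_def)

lemma pbold_abs: "pbold t \<bar>x\<bar> = pbold t x"
  by (simp add: pbold_def)

lemma aux_abs1: "(k::real) \<le> -1 \<or> 1 \<le> k \<Longrightarrow> \<bar>x\<bar> \<le> 1/2 \<Longrightarrow> \<bar>k\<bar>/2 \<le> \<bar>x+k\<bar>"
  by (auto simp: abs_if split: if_split_asm)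

lemma aux_abs2: "(j::real) \<le> -1 \<or> 1 \<le> j \<Longrightarrow> -1/2 \<le> r \<Longrightarrow> r < 1/2 \<Longrightarrow> 1/2 \<le> \<bar>r + j\<bar>"
  by (auto simp: abs_if split: if_split_asm)

lemma aux_lin1: "1 \<le> (K::real) \<Longrightarrow> K/4 \<le> A \<Longrightarrow> 0 \<le> T \<Longrightarrow> (1+K)/8 \<le> A+T"
  by (simp add: field_simps; linarith)

definition Ck :: real where "Ck = (8 / pi) * infsum (\<lambda>k::int. 1 / (1 + (real_of_int k)\<^sup>2)) UNIV"

lemma pbold_far:
  assumes t: "0 < t" and x: "\<bar>x\<bar> \<le> 1/2" and k: "k \<noteq> 0"
  shows "pbold t (x + real_of_int k) \<le> t * (8 / pi * (1 / (1 + (real_of_int k)\<^sup>2)))"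
proof -
  let ?k = "real_of_int k"
  have k1: "1 \<le> \<bar>?k\<bar>" using k by linarith
  have "k \<le> -1 \<or> 1 \<le> k" using k by linarith
  then have kk: "?k \<le> -1 \<or> 1 \<le> ?k" by auto
  have a: "\<bar>?k\<bar> / 2 \<le> \<bar>x + ?k\<bar>" using aux_abs1[OF kk x] .
  have "(\<bar>?k\<bar> / 2)\<^sup>2 \<le> \<bar>x + ?k\<bar>\<^sup>2"
    by (rule power_mono[OF a]) simp
  then have b: "?k\<^sup>2 / 4 \<le> (x + ?k)\<^sup>2" by (simp add: power_divide)
  have "1 \<le> ?k\<^sup>2" using k1
    by (metis abs_ge_self abs_le_square_iff abs_one le_numeral_extra(1) power_one order_trans)
  then have c: "(1 + ?k\<^sup>2) / 8 \<le> (x + ?k)\<^sup>2 + t\<^sup>2" using aux_lin1[OF _ b zero_le_power2[of t]] by blast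
  have "pbold t (x + ?k) = t / (pi * ((x + ?k)\<^sup>2 + t\<^sup>2))"
    using t by (simp add: pbold_def)
  also have "\<dots> \<le> t / (pi * ((1 + ?k\<^sup>2) / 8))"
    by (rule frac_le) (use t c in \<open>auto simp: add_pos_nonneg\<close>)
  also have "\<dots> = t * (8 / pi * (1 / (1 + ?k\<^sup>2)))"
    by (simp add: field_simps)
  finally show ?thesis .
qed

lemma pker_le:
  assumes t: "0 < t" and x: "\<bar>x\<bar> \<le> 1/2"
  shows "pker (t, x) \<le> pbold t x + t * Ck"
proof -
  let ?g = "\<lambda>k::int. (if k = 0 then pbold t x else 0) + t * (8 / pi * (1 / (1 + (real_of_int k)\<^sup>2)))"
  have s1: "(\<lambda>k::int. if k = 0 then pbold t x else 0) summable_on UNIV"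
    by (rule summable_on_cong_neutral[where S="{0}", THEN iffD1]) auto
  have i1: "infsum (\<lambda>k::int. if k = 0 then pbold t x else 0) UNIV = pbold t x"
    by (subst infsum_cong_neutral[where T="{0}" and g="\<lambda>_. pbold t x"]) auto
  have s2: "(\<lambda>k::int. t * (8 / pi * (1 / (1 + (real_of_int k)\<^sup>2)))) summable_on UNIV"
    by (intro summable_on_cmult_right summable_int_inv_sq)
  have i2: "infsum (\<lambda>k::int. t * (8 / pi * (1 / (1 + (real_of_int k)\<^sup>2)))) UNIV = t * Ck"
  proof -
    have "infsum (\<lambda>k::int. t * (8 / pi * (1 / (1 + (real_of_int k)\<^sup>2)))) UNIV
        = infsum (\<lambda>k::int. (t * (8 / pi)) * (1 / (1 + (real_of_int k)\<^sup>2))) UNIV"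
      by (simp only: mult.assoc)
    also have "\<dots> = (t * (8 / pi)) * infsum (\<lambda>k::int. 1 / (1 + (real_of_int k)\<^sup>2)) UNIV"
      by (rule infsum_cmult_right')
    finally show ?thesis by (simp add: Ck_def mult.assoc)
  qed
  have sg: "?g summable_on UNIV" by (rule summable_on_add[OF s1 s2])
  have le: "pbold t (x + real_of_int k) \<le> ?g k" for k
  proof (cases "k = 0")
    case True then show ?thesis using t by (simp add: zero_le_divide_iff)
  next
    case False then show ?thesis using pbold_far[OF t x False] by simp
  qed
  have sf: "(\<lambda>k::int. pbold t (x + real_of_int k)) summable_on UNIV"
  proof (rule summable_on_comparison_test[OF sg])
    fix k :: int assume "k \<in> UNIV" show "pbold t (x + real_of_int k) \<le> ?g k" by (rule le)
  qed (simp add: pbold_nonneg)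
  have "pker (t, x) = infsum (\<lambda>k::int. pbold t (x + real_of_int k)) UNIV"
    by (simp add: pker_def)
  also have "\<dots> \<le> infsum ?g UNIV"
    by (rule infsum_mono[OF sf sg le])
  also have "\<dots> = infsum (\<lambda>k::int. if k = 0 then pbold t x else 0) UNIV
       + infsum (\<lambda>k::int. t * (8 / pi * (1 / (1 + (real_of_int k)\<^sup>2)))) UNIV"
    by (rule infsum_add[OF s1 s2])
  also have "\<dots> = pbold t x + t * Ck"
    by (simp only: i1 i2)
  finally show ?thesis .
qed

lemma Ck_nonneg: "0 \<le> Ck"
  unfolding Ck_def by (intro mult_nonneg_nonneg infsum_nonneg) auto

lemma pker_nonpos: "t \<le> 0 \<Longrightarrow> pker (t, x) = 0"
  by (simp add: pker_def pbold_def)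

lemma pker_nonneg: "0 \<le> pker z"
  unfolding pker_def by (intro infsum_nonneg) (simp add: pbold_nonneg)

locale rhoL =
  fixes \<rho> :: "real \<times> real \<Rightarrow> real" and s0 :: real
  assumes nonneg: "\<And>z. 0 \<le> \<rho> z"
    and supp: "closure {z. \<rho> z \<noteq> 0} \<subseteq> {-s0..s0} \<times> {-1/4<..<1/4}"
    and cont: "continuous_on UNIV \<rho>"
    and int1: "(LINT z | lborel. \<rho> z) = 1"
    and s0pos: "s0 > 0"
begin

lemma supp': "\<rho> z \<noteq> 0 \<Longrightarrow> - s0 \<le> fst z \<and> fst z \<le> s0 \<and> - 1/4 < snd z \<and> snd z < 1/4"
  using supp closure_subset[of "{z. \<rho> z \<noteq> 0}"] by (cases z) auto

definition rt :: "real \<Rightarrow> real \<times> real \<Rightarrow> real" where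
  "rt e y = \<rho> ((1 / e) *\<^sub>R y) / e\<^sup>2"

definition RR :: "real \<Rightarrow> real \<times> real \<Rightarrow> real" where
  "RR e y = rt e (fst y, red (snd y))"

lemma rt_nonneg: "0 \<le> rt e y" by (simp add: rt_def nonneg)
lemma RR_nonneg: "0 \<le> RR e y" by (simp add: RR_def rt_nonneg)

lemma rt_supp:
  assumes "0 < e" "rt e y \<noteq> 0"
  shows "\<bar>fst y\<bar> \<le> s0 * e" "\<bar>snd y\<bar> < e / 4"
proof -
  have "\<rho> ((1 / e) *\<^sub>R y) \<noteq> 0" using assms by (auto simp: rt_def)
  from supp'[OF this] assms(1) show "\<bar>fst y\<bar> \<le> s0 * e" "\<bar>snd y\<bar> < e / 4"
    by (cases y; auto simp: field_simps abs_if)+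
qed

lemma rho_eps_eq:
  assumes e: "0 < e" "e < 1"
  shows "rho_eps \<rho> e y = RR e y"
proof -
  obtain t x where y: "y = (t, x)" by (cases y)
  let ?k0 = "- round x"
  have eq: "e powi (-2) * \<rho> ((1/e) *\<^sub>R (t, x + real_of_int k)) = 0" if "k \<noteq> ?k0" for k
  proof -
    have "x + real_of_int k = red x + real_of_int (round x + k)" by (simp add: red_def)
    moreover have "round x + k \<le> -1 \<or> 1 \<le> round x + k" using that by linarith
    then have "real_of_int (round x + k) \<le> -1 \<or> 1 \<le> real_of_int (round x + k)" by linarith
    ultimately have "1/2 \<le> \<bar>x + real_of_int k\<bar>"
      using aux_abs2[OF _ red_ge[of x] red_lt[of x]] by metis
    then have "\<not> (\<bar>snd (t, x + real_of_int k)\<bar> < e / 4)" using e by auto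
    then have "rt e (t, x + real_of_int k) = 0" using rt_supp(2)[OF e(1)] by blast
    then show ?thesis using e by (simp add: rt_def)
  qed
  have "rho_eps \<rho> e y = infsum (\<lambda>k::int. e powi (-2) * \<rho> ((1/e) *\<^sub>R (t, x + real_of_int k))) {?k0}"
    unfolding rho_eps_def y fst_conv snd_conv
    using eq by (intro infsum_cong_neutral) auto
  also have "\<dots> = e powi (-2) * \<rho> ((1/e) *\<^sub>R (t, red x))"
    by (simp add: red_def)
  also have "\<dots> = RR e y"
    using e by (simp add: RR_def rt_def y power_int_minus divide_inverse mult.commute)
  finally show ?thesis .
qed

lemma RR_periodic: "RR e (t, x + real_of_int n) = RR e (t, x)"
  by (simp add: RR_def)

end

lemma nn_integral_line_FTC:
  fixes f F :: "real \<Rightarrow> real"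
  assumes fm[measurable]: "f \<in> borel_measurable borel" and D: "\<And>x. DERIV F x :> f x"
    and nn: "\<And>x. 0 \<le> f x"
    and A: "(F \<longlongrightarrow> A) at_bot" and B: "(F \<longlongrightarrow> B) at_top"
  shows "(\<integral>\<^sup>+x. ennreal (f x) \<partial>lborel) \<le> ennreal (B - A)"
proof -
  have mono: "F x \<le> F y" if "x \<le> y" for x y
    by (rule DERIV_nonneg_imp_nondecreasing[OF that]) (use D nn in blast)
  have AF: "A \<le> F 0"
    by (rule tendsto_upperbound[OF A]) (auto simp: eventually_at_bot_linorder intro!: exI[of _ 0] mono)
  have FB: "F 0 \<le> B"
    by (rule tendsto_lowerbound[OF B]) (auto simp: eventually_at_top_linorder intro!: exI[of _ 0] mono)
  have "(\<integral>\<^sup>+x. ennreal (f x) \<partial>lborel)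
      = (\<integral>\<^sup>+x. ennreal (f x) * indicator {0..} x + ennreal (f x) * indicator {..<0} x \<partial>lborel)"
    by (intro nn_integral_cong) (auto split: split_indicator)
  also have "\<dots> = (\<integral>\<^sup>+x. ennreal (f x) * indicator {0..} x \<partial>lborel)
      + (\<integral>\<^sup>+x. ennreal (f x) * indicator {..<0} x \<partial>lborel)"
    by (rule nn_integral_add) auto
  also have "(\<integral>\<^sup>+x. ennreal (f x) * indicator {0..} x \<partial>lborel) = ennreal (B - F 0)"
    by (rule nn_integral_FTC_atLeast[OF fm D nn B])
  also have "(\<integral>\<^sup>+x. ennreal (f x) * indicator {..<0} x \<partial>lborel) \<le> ennreal (F 0 - A)"
  proof -
    have "(\<integral>\<^sup>+x. ennreal (f x) * indicator {..<0} x \<partial>lborel)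
        = (\<integral>\<^sup>+x. ennreal (f (- x)) * indicator {..<0} (- x) \<partial>lborel)"
      using nn_integral_real_affine[of "\<lambda>x. ennreal (f x) * indicator {..<0} x" "-1" 0] by simp
    also have "\<dots> \<le> (\<integral>\<^sup>+x. ennreal (f (- x)) * indicator {0..} x \<partial>lborel)"
      by (auto intro!: nn_integral_mono split: split_indicator)
    also have "\<dots> = ennreal (- A - (- F (- 0)))"
    proof (rule nn_integral_FTC_atLeast[where F="\<lambda>x. - F (- x)"])
      show "(\<lambda>x. f (- x)) \<in> borel_measurable borel" by measurable
      show "DERIV (\<lambda>x. - F (- x)) x :> f (- x)" for x
        using DERIV_minus[OF iffD1[OF DERIV_mirror D[of "-x"]]] by simp
      show "0 \<le> f (- x)" for x by (rule nn)
      show "((\<lambda>x. - F (- x)) \<longlongrightarrow> - A) at_top"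
        by (intro tendsto_minus filterlim_compose[OF A filterlim_uminus_at_bot_at_top])
    qed
    finally show ?thesis by simp
  qed
  finally have "(\<integral>\<^sup>+x. ennreal (f x) \<partial>lborel) \<le> ennreal (B - F 0) + ennreal (F 0 - A)"
    by (simp add: add_left_mono)
  also have "\<dots> = ennreal (B - A)"
    using AF FB by (subst ennreal_plus[symmetric]) auto
  finally show ?thesis .
qed

lemma pbold_measurable[measurable]: "(\<lambda>y. pbold s y) \<in> borel_measurable borel"
  unfolding pbold_def by measurable

lemma pbold_pos: "0 < s \<Longrightarrow> pbold s y = s / (pi * (y\<^sup>2 + s\<^sup>2))"
  by (simp add: pbold_def)

lemma int_pbold_le:
  assumes s: "0 < s"
  shows "(\<integral>\<^sup>+y. ennreal (pbold s y) \<partial>lborel) \<le> 1"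
proof -
  have "(\<integral>\<^sup>+y. ennreal (pbold s y) \<partial>lborel) \<le> ennreal (1/2 - (- 1/2))"
  proof (rule nn_integral_line_FTC[where F="\<lambda>y. arctan (y / s) / pi"])
    show "DERIV (\<lambda>y. arctan (y / s) / pi) y :> pbold s y" for y
    proof -
      have "DERIV (\<lambda>y. arctan (y / s) / pi) y :> inverse (1 + (y/s)\<^sup>2) * (1 / s) / pi"
        using s by (auto intro!: derivative_eq_intros)
      moreover have "inverse (1 + (y/s)\<^sup>2) * (1 / s) / pi = pbold s y"
        using s by (simp add: pbold_pos field_simps power2_eq_square)
      ultimately show ?thesis by simp
    qed
    show "0 \<le> pbold s y" for y by (rule pbold_nonneg)
    show "((\<lambda>y. arctan (y / s) / pi) \<longlongrightarrow> - 1 / 2) at_bot" using s by real_asymp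
    show "((\<lambda>y. arctan (y / s) / pi) \<longlongrightarrow> 1 / 2) at_top" using s by real_asymp
  qed simp
  then show ?thesis by simp
qed

lemma conv_poly:
  fixes a b x y :: real
  shows "(x\<^sup>2+b\<^sup>2-a\<^sup>2) * ((y+x)\<^sup>2+b\<^sup>2) + (x\<^sup>2+a\<^sup>2-b\<^sup>2) * (y\<^sup>2+a\<^sup>2)
     - 2*x*(y*((y+x)\<^sup>2+b\<^sup>2) - (y+x)*(y\<^sup>2+a\<^sup>2)) = (x\<^sup>2+(a+b)\<^sup>2)*(x\<^sup>2+(a-b)\<^sup>2)"
  by (simp add: power2_eq_square algebra_simps)

lemma conv_poly2:
  fixes a b x :: real
  shows "(x\<^sup>2+b\<^sup>2-a\<^sup>2) * b + (x\<^sup>2+a\<^sup>2-b\<^sup>2) * a = (a+b) * (x\<^sup>2+(a-b)\<^sup>2)"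
  by (simp add: power2_eq_square algebra_simps)

lemma int_pbold_conv:
  assumes a: "0 < a" and b: "0 < b" and nd: "a \<noteq> b \<or> x \<noteq> 0"
  shows "(\<integral>\<^sup>+y. ennreal (pbold a y * pbold b (y + x)) \<partial>lborel) \<le> ennreal (pbold (a+b) x)"
proof -
  define P where "P = x\<^sup>2+b\<^sup>2-a\<^sup>2"
  define Q where "Q = x\<^sup>2+a\<^sup>2-b\<^sup>2"
  define \<Delta> where "\<Delta> = (x\<^sup>2+(a+b)\<^sup>2)*(x\<^sup>2+(a-b)\<^sup>2)"
  have d1pos: "0 < x\<^sup>2+(a+b)\<^sup>2" using a b by (simp add: add_nonneg_pos)
  have d2pos: "0 < x\<^sup>2+(a-b)\<^sup>2" using nd by (auto simp: add_nonneg_pos add_pos_nonneg)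
  have Dpos: "0 < \<Delta>" unfolding \<Delta>_def using d1pos d2pos by simp
  define c where "c = a * b / pi\<^sup>2"
  define F where "F y = c * (P/(a*\<Delta>) * arctan (y/a) + Q/(b*\<Delta>) * arctan ((y+x)/b)
      - x/\<Delta> * (ln (y\<^sup>2+a\<^sup>2) - ln ((y+x)\<^sup>2+b\<^sup>2)))" for y
  have "(\<integral>\<^sup>+y. ennreal (pbold a y * pbold b (y + x)) \<partial>lborel)
      \<le> ennreal (c * (P/(a*\<Delta>) * (pi/2) + Q/(b*\<Delta>) * (pi/2) - x/\<Delta> * 0)
             - c * (P/(a*\<Delta>) * (-(pi/2)) + Q/(b*\<Delta>) * (-(pi/2)) - x/\<Delta> * 0))"
  proof (rule nn_integral_line_FTC[where F=F])
    show "(\<lambda>y. pbold a y * pbold b (y + x)) \<in> borel_measurable borel" by measurable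
    show "0 \<le> pbold a y * pbold b (y + x)" for y by (simp add: pbold_nonneg)
    show "DERIV F y :> pbold a y * pbold b (y + x)" for y
    proof -
      define U where "U = y\<^sup>2+a\<^sup>2"
      define V where "V = (y+x)\<^sup>2+b\<^sup>2"
      have U: "0 < U" unfolding U_def using a by (simp add: add_nonneg_pos)
      have V: "0 < V" unfolding V_def using b by (simp add: add_nonneg_pos)
      have d1: "DERIV (\<lambda>y. arctan (y/a)) y :> a / U"
      proof -
        have "DERIV (\<lambda>y. arctan (y/a)) y :> inverse (1 + (y/a)\<^sup>2) * (1/a)"
          using a by (auto intro!: derivative_eq_intros)
        moreover have "inverse (1 + (y/a)\<^sup>2) * (1/a) = a / U"
          using a U by (simp add: U_def field_simps power2_eq_square)
        ultimately show ?thesis by simp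
      qed
      have d2: "DERIV (\<lambda>y. arctan ((y+x)/b)) y :> b / V"
      proof -
        have "DERIV (\<lambda>y. arctan ((y+x)/b)) y :> inverse (1 + ((y+x)/b)\<^sup>2) * ((1 + 0)/b)"
          using b by (auto intro!: derivative_eq_intros)
        moreover have "inverse (1 + ((y+x)/b)\<^sup>2) * ((1+0)/b) = b / V"
          using b V by (simp add: V_def field_simps power2_eq_square)
        ultimately show ?thesis by simp
      qed
      have d3: "DERIV (\<lambda>y. ln (y\<^sup>2+a\<^sup>2)) y :> 2*y / U"
        using U by (auto intro!: derivative_eq_intros simp: U_def)
      have d4: "DERIV (\<lambda>y. ln ((y+x)\<^sup>2+b\<^sup>2)) y :> 2*(y+x) / V"
        using V by (auto intro!: derivative_eq_intros simp: V_def)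
      have "DERIV F y :> c * (P/(a*\<Delta>) * (a/U) + Q/(b*\<Delta>) * (b/V) - x/\<Delta> * (2*y/U - 2*(y+x)/V))"
        unfolding F_def
        by (intro DERIV_cmult DERIV_add DERIV_diff d1 d2 d3 d4)
      moreover have "c * (P/(a*\<Delta>) * (a/U) + Q/(b*\<Delta>) * (b/V) - x/\<Delta> * (2*y/U - 2*(y+x)/V))
          = pbold a y * pbold b (y + x)"
      proof -
        have "P/(a*\<Delta>) * (a/U) + Q/(b*\<Delta>) * (b/V) - x/\<Delta> * (2*y/U - 2*(y+x)/V)
            = (P*V + Q*U - 2*x*(y*V - (y+x)*U)) / (\<Delta>*U*V)"
          using a b U V Dpos by (simp add: field_simps)
        also have "P*V + Q*U - 2*x*(y*V - (y+x)*U) = \<Delta>"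
          unfolding P_def Q_def U_def V_def \<Delta>_def by (rule conv_poly)
        finally have "P/(a*\<Delta>) * (a/U) + Q/(b*\<Delta>) * (b/V) - x/\<Delta> * (2*y/U - 2*(y+x)/V) = 1/(U*V)"
          using Dpos by simp
        then have "c * (P/(a*\<Delta>) * (a/U) + Q/(b*\<Delta>) * (b/V) - x/\<Delta> * (2*y/U - 2*(y+x)/V)) = c / (U*V)"
          by simp
        also have "c / (U*V) = (a / (pi * U)) * (b / (pi * V))"
          using U V by (simp add: c_def power2_eq_square field_simps)
        also have "a / (pi * U) = pbold a y" using a by (simp add: pbold_pos U_def)
        also have "b / (pi * V) = pbold b (y + x)" using b by (simp add: pbold_pos V_def)
        finally show ?thesis .
      qed
      ultimately show ?thesis by simp
    qed
    have lnlim_top: "((\<lambda>y. ln (y\<^sup>2+a\<^sup>2) - ln ((y+x)\<^sup>2+b\<^sup>2)) \<longlongrightarrow> 0) at_top"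
      using a b by real_asymp
    have lnlim_bot: "((\<lambda>y. ln (y\<^sup>2+a\<^sup>2) - ln ((y+x)\<^sup>2+b\<^sup>2)) \<longlongrightarrow> 0) at_bot"
      using a b by real_asymp
    have at1: "((\<lambda>y. arctan (y/a)) \<longlongrightarrow> pi/2) at_top" using a by real_asymp
    have at2: "((\<lambda>y. arctan ((y+x)/b)) \<longlongrightarrow> pi/2) at_top" using b by real_asymp
    have ab1: "((\<lambda>y. arctan (y/a)) \<longlongrightarrow> -(pi/2)) at_bot" using a by real_asymp
    have ab2: "((\<lambda>y. arctan ((y+x)/b)) \<longlongrightarrow> -(pi/2)) at_bot" using b by real_asymp
    show "(F \<longlongrightarrow> c * (P/(a*\<Delta>) * (pi/2) + Q/(b*\<Delta>) * (pi/2) - x/\<Delta> * 0)) at_top"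
      unfolding F_def by (intro tendsto_intros at1 at2 lnlim_top)
    show "(F \<longlongrightarrow> c * (P/(a*\<Delta>) * (-(pi/2)) + Q/(b*\<Delta>) * (-(pi/2)) - x/\<Delta> * 0)) at_bot"
      unfolding F_def by (intro tendsto_intros ab1 ab2 lnlim_bot)
  qed
  also have "c * (P/(a*\<Delta>) * (pi/2) + Q/(b*\<Delta>) * (pi/2) - x/\<Delta> * 0)
             - c * (P/(a*\<Delta>) * (-(pi/2)) + Q/(b*\<Delta>) * (-(pi/2)) - x/\<Delta> * 0)
        = pbold (a+b) x"
  proof -
    have "c * (P/(a*\<Delta>) * (pi/2) + Q/(b*\<Delta>) * (pi/2) - x/\<Delta> * 0)
             - c * (P/(a*\<Delta>) * (-(pi/2)) + Q/(b*\<Delta>) * (-(pi/2)) - x/\<Delta> * 0)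
        = (P * b + Q * a) / (pi * \<Delta>)"
      using a b Dpos by (simp add: c_def field_simps power2_eq_square)
    also have "P * b + Q * a = (a+b) * (x\<^sup>2+(a-b)\<^sup>2)"
      unfolding P_def Q_def by (rule conv_poly2)
    finally have "c * (P/(a*\<Delta>) * (pi/2) + Q/(b*\<Delta>) * (pi/2) - x/\<Delta> * 0)
             - c * (P/(a*\<Delta>) * (-(pi/2)) + Q/(b*\<Delta>) * (-(pi/2)) - x/\<Delta> * 0)
        = (a+b) * (x\<^sup>2+(a-b)\<^sup>2) / (pi * ((x\<^sup>2+(a+b)\<^sup>2) * (x\<^sup>2+(a-b)\<^sup>2)))"
      by (simp add: \<Delta>_def)
    also have "\<dots> = (a+b) / (pi * (x\<^sup>2+(a+b)\<^sup>2))"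
      using nonzero_mult_divide_mult_cancel_right[of "x\<^sup>2+(a-b)\<^sup>2" "a+b" "pi*(x\<^sup>2+(a+b)\<^sup>2)"] d2pos nd
      by (auto simp: mult.assoc)
    also have "\<dots> = pbold (a+b) x" using a b by (simp add: pbold_pos)
    finally show ?thesis .
  qed
  finally show ?thesis .
qed


lemma pbold_measurable1[measurable]: "(\<lambda>u. pbold u d) \<in> borel_measurable borel"
  unfolding pbold_def by measurable

lemma pbold_time_eq: "0 \<le> u \<Longrightarrow> pbold u d = u / (pi * (d\<^sup>2 + u\<^sup>2))"
  by (cases "u = 0") (auto simp: pbold_def add.commute)

lemma int_pbold_time:
  assumes lo: "0 \<le> lo" "lo \<le> hi" and nd: "0 < lo \<or> d \<noteq> 0"
  shows "(\<integral>\<^sup>+u. ennreal (pbold u d) * indicator {lo..hi} u \<partial>lborel)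
     = ennreal ((ln (d\<^sup>2 + hi\<^sup>2) - ln (d\<^sup>2 + lo\<^sup>2)) / (2 * pi))"
proof -
  have pos: "0 < d\<^sup>2 + u\<^sup>2" if "u \<in> {lo..hi}" for u
    using that nd lo by (auto simp: add_pos_nonneg add_nonneg_pos)
  have "(\<integral>\<^sup>+u. ennreal (pbold u d) * indicator {lo..hi} u \<partial>lborel)
     = ennreal (ln (d\<^sup>2 + hi\<^sup>2) / (2 * pi) - ln (d\<^sup>2 + lo\<^sup>2) / (2 * pi))"
  proof (rule nn_integral_FTC_Icc[where F="\<lambda>u. ln (d\<^sup>2 + u\<^sup>2) / (2 * pi)"])
    show "(\<lambda>u. pbold u d) \<in> borel_measurable borel" by measurable
    show "0 \<le> pbold u d" for u by (rule pbold_nonneg)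
    show "lo \<le> hi" by (rule lo(2))
    show "DERIV (\<lambda>u. ln (d\<^sup>2 + u\<^sup>2) / (2 * pi)) u :> pbold u d" if u: "u \<in> {lo..hi}" for u
    proof -
      have "DERIV (\<lambda>u. ln (d\<^sup>2 + u\<^sup>2) / (2 * pi)) u :> (2 * u) / (d\<^sup>2 + u\<^sup>2) / (2 * pi)"
        using pos[OF u] by (auto intro!: derivative_eq_intros simp: power2_eq_square)
      moreover have "(2 * u) / (d\<^sup>2 + u\<^sup>2) / (2 * pi) = pbold u d"
      proof -
        have "(2 * u) / (d\<^sup>2 + u\<^sup>2) / (2 * pi) = (2 * u) / (2 * (pi * (d\<^sup>2 + u\<^sup>2)))"
          by (simp only: divide_divide_eq_left ac_simps)
        also have "\<dots> = u / (pi * (d\<^sup>2 + u\<^sup>2))"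
          by (rule nonzero_mult_divide_mult_cancel_left) simp
        finally show ?thesis using u lo by (simp add: pbold_time_eq)
      qed
      ultimately show ?thesis by simp
    qed
  qed
  then show ?thesis by (simp add: diff_divide_distrib)
qed

definition lg :: "real \<Rightarrow> real" where "lg \<tau> = max 0 (- ln \<bar>\<tau>\<bar>)"

lemma lg_measurable[measurable]: "lg \<in> borel_measurable borel"
  unfolding lg_def by measurable

lemma lg_nonneg: "0 \<le> lg \<tau>" by (simp add: lg_def)

lemma int_mlog01: "(\<integral>\<^sup>+\<tau>. ennreal (- ln \<tau>) * indicator {0..1} \<tau> \<partial>lborel) = 1"
proof -
  let ?F = "\<lambda>\<tau>::real. \<tau> - \<tau> * ln \<tau>"
  have "((\<lambda>\<tau>. - ln \<tau>) has_integral (?F 1 - ?F 0)) {0..1}"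
  proof (rule fundamental_theorem_of_calculus_interior)
    show "continuous_on {0..1} ?F"
    proof (rule continuous_on_IccI)
      show "(?F \<longlongrightarrow> ?F 0) (at_right 0)" by simp real_asymp
      show "(?F \<longlongrightarrow> ?F 1) (at_left 1)" by (intro tendsto_intros) auto
      show "?F \<midarrow>x\<rightarrow> ?F x" if "0 < x" "x < 1" for x
        using that by (intro tendsto_intros) auto
    qed simp
    show "(?F has_vector_derivative - ln x) (at x)" if "x \<in> {0<..<1}" for x
    proof -
      have "(?F has_real_derivative (1 - (1 * ln x + x * (1 / x)))) (at x)"
        using that by (auto intro!: derivative_eq_intros)
      then show ?thesis using that by (simp add: has_real_derivative_iff_has_vector_derivative)
    qed
  qed simp
  then have "((\<lambda>\<tau>::real. - ln \<tau>) has_integral 1) {0..1}" by simp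
  moreover have "0 \<le> - ln \<tau>" if "\<tau> \<in> {0..1::real}" for \<tau>
    using that by (cases "\<tau> = 0") auto
  ultimately have "(\<integral>\<^sup>+\<tau>. ennreal (- ln \<tau>) * indicator {0..1} \<tau> \<partial>lborel) = ennreal 1"
    by (intro nn_integral_has_integral_lebesgue') auto
  then show ?thesis by simp
qed

lemma int_lg: "(\<integral>\<^sup>+\<tau>. ennreal (lg \<tau>) \<partial>lborel) \<le> 2"
proof -
  let ?g = "\<lambda>\<tau>. ennreal (- ln \<tau>) * indicator {0..1} \<tau>"
  have "(\<integral>\<^sup>+\<tau>. ennreal (lg \<tau>) \<partial>lborel) \<le> (\<integral>\<^sup>+\<tau>. ?g \<tau> + ?g (-\<tau>) \<partial>lborel)"
  proof (rule nn_integral_mono)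
    fix \<tau> :: real
    show "ennreal (lg \<tau>) \<le> ?g \<tau> + ?g (-\<tau>)"
    proof (cases "\<tau> = 0 \<or> 1 < \<bar>\<tau>\<bar>")
      case True
      then have "lg \<tau> = 0" by (auto simp: lg_def)
      then show ?thesis by simp
    next
      case False
      then have "0 < \<tau> \<and> \<tau> \<le> 1 \<or> 0 < -\<tau> \<and> -\<tau> \<le> 1" by auto
      then show ?thesis
      proof
        assume h: "0 < \<tau> \<and> \<tau> \<le> 1"
        then have "lg \<tau> = - ln \<tau>" by (auto simp: lg_def)
        then show ?thesis using h by (auto simp: indicator_def)
      next
        assume h: "0 < -\<tau> \<and> -\<tau> \<le> 1"
        then have "lg \<tau> = - ln (-\<tau>)" by (auto simp: lg_def)
        then show ?thesis using h by (auto simp: indicator_def)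
      qed
    qed
  qed
  also have "\<dots> = (\<integral>\<^sup>+\<tau>. ?g \<tau> \<partial>lborel) + (\<integral>\<^sup>+\<tau>. ?g (-\<tau>) \<partial>lborel)"
    by (rule nn_integral_add) auto
  also have "(\<integral>\<^sup>+\<tau>. ?g (-\<tau>) \<partial>lborel) = (\<integral>\<^sup>+\<tau>. ?g \<tau> \<partial>lborel)"
    using nn_integral_real_affine[of ?g "-1" 0] by simp
  finally show ?thesis by (simp add: int_mlog01 one_add_one)
qed

lemma nn_integral_lborel_pair:
  fixes h :: "real \<times> real \<Rightarrow> ennreal"
  assumes hm[measurable]: "h \<in> borel_measurable borel"
  shows "(\<integral>\<^sup>+a. h a \<partial>lborel) = (\<integral>\<^sup>+s. \<integral>\<^sup>+y. h (s, y) \<partial>lborel \<partial>lborel)"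
proof -
  have m: "h \<in> borel_measurable (lborel \<Otimes>\<^sub>M lborel)" by (simp add: lborel_prod)
  show ?thesis
    by (subst lborel_prod[symmetric], subst lborel.nn_integral_fst[OF m]) simp
qed

lemma fst_borel[measurable]: "(fst :: real \<times> real \<Rightarrow> real) \<in> borel_measurable borel"
  by (subst borel_prod[symmetric]) (rule measurable_fst)

lemma snd_borel[measurable]: "(snd :: real \<times> real \<Rightarrow> real) \<in> borel_measurable borel"
  by (subst borel_prod[symmetric]) (rule measurable_snd)

lemma pbold_measurable2[measurable]:
  assumes [measurable]: "f \<in> borel_measurable M" "g \<in> borel_measurable M"
  shows "(\<lambda>z. pbold (f z) (g z)) \<in> borel_measurable M"
  unfolding pbold_def by measurable

definition qt :: "real \<Rightarrow> real \<Rightarrow> real \<times> real \<Rightarrow> real" where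
  "qt L Cq a = (if 0 < fst a \<and> fst a < L then pbold (fst a) (snd a) + Cq * indicator {-1/2..1/2} (snd a) else 0)"

lemma qt_measurable[measurable]: "qt L Cq \<in> borel_measurable borel"
  unfolding qt_def by measurable

lemma qt_nonneg: "0 \<le> Cq \<Longrightarrow> 0 \<le> qt L Cq a"
  by (simp add: qt_def pbold_nonneg)

definition Kf :: "real \<Rightarrow> real \<Rightarrow> real \<times> real \<Rightarrow> ennreal" where
  "Kf L Cq u = (\<integral>\<^sup>+a. ennreal (qt L Cq a) * ennreal (qt L Cq (a + u)) \<partial>lborel)"

lemma int_pbold_shift:
  assumes "0 < s" shows "(\<integral>\<^sup>+y. ennreal (pbold s (y + w)) \<partial>lborel) \<le> 1"
proof -
  have "(\<integral>\<^sup>+y. ennreal (pbold s y) \<partial>lborel) = (\<integral>\<^sup>+y. ennreal (pbold s (w + y)) \<partial>lborel)"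
    using nn_integral_real_affine[of "\<lambda>y. ennreal (pbold s y)" 1 w] by simp
  then have "(\<integral>\<^sup>+y. ennreal (pbold s (y + w)) \<partial>lborel) = (\<integral>\<^sup>+y. ennreal (pbold s y) \<partial>lborel)"
    by (simp add: add.commute)
  then show ?thesis using int_pbold_le[OF assms] by simp
qed

lemma per_s_bound:
  assumes s: "0 < s" "s < L" and st: "0 < s + t" "s + t < L" and nd: "t \<noteq> 0 \<or> w \<noteq> 0"
    and Cq: "0 \<le> Cq"
  shows "(\<integral>\<^sup>+y. ennreal (qt L Cq (s, y)) * ennreal (qt L Cq ((s, y) + (t, w))) \<partial>lborel)
     \<le> ennreal (pbold (2 * s + t) w) + ennreal (2*Cq + Cq\<^sup>2)"
proof -
  let ?i = "\<lambda>y::real. indicator {-1/2..1/2::real} y :: real"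
  have pt: "ennreal (qt L Cq (s, y)) * ennreal (qt L Cq ((s, y) + (t, w)))
     \<le> ennreal (pbold s y * pbold (s+t) (y+w)) + ennreal (Cq * pbold (s+t) (y+w))
       + ennreal (Cq * pbold s y) + ennreal (Cq\<^sup>2 * ?i y)" for y
  proof -
    have q1: "qt L Cq (s, y) = pbold s y + Cq * ?i y" using s by (simp add: qt_def)
    have q2: "qt L Cq (s + t, y + w) = pbold (s+t) (y+w) + Cq * ?i (y+w)" using st by (simp add: qt_def)
    have i1: "0 \<le> ?i y" "?i y \<le> 1" "0 \<le> ?i (y+w)" "?i (y+w) \<le> 1" by (auto simp: indicator_def)
    have p: "0 \<le> pbold s y" "0 \<le> pbold (s+t) (y+w)" by (auto simp: pbold_nonneg)
    have "(pbold s y + Cq * ?i y) * (pbold (s+t) (y+w) + Cq * ?i (y+w))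
       = pbold s y * pbold (s+t) (y+w) + Cq * (?i y * pbold (s+t) (y+w))
         + Cq * (pbold s y * ?i (y+w)) + Cq\<^sup>2 * (?i y * ?i (y+w))"
      by (simp add: algebra_simps power2_eq_square)
    also have "\<dots> \<le> pbold s y * pbold (s+t) (y+w) + Cq * pbold (s+t) (y+w)
         + Cq * pbold s y + Cq\<^sup>2 * ?i y"
    proof -
      have a: "?i y * pbold (s+t) (y+w) \<le> pbold (s+t) (y+w)"
        using i1 p by (simp add: mult_left_le_one_le)
      have b: "pbold s y * ?i (y+w) \<le> pbold s y"
        using i1 p by (simp add: mult_right_le_one_le)
      have c: "?i y * ?i (y+w) \<le> ?i y"
        using i1 by (simp add: mult_right_le_one_le)
      show ?thesis
        using mult_left_mono[OF a Cq] mult_left_mono[OF b Cq] mult_left_mono[OF c zero_le_power2[of Cq]]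
        by linarith
    qed
    finally have "qt L Cq (s, y) * qt L Cq ((s, y) + (t, w)) \<le> pbold s y * pbold (s+t) (y+w) + Cq * pbold (s+t) (y+w)
         + Cq * pbold s y + Cq\<^sup>2 * ?i y" by (simp add: q1 q2)
    moreover have "0 \<le> qt L Cq (s, y)" "0 \<le> qt L Cq ((s, y) + (t, w))" using Cq by (auto simp: qt_nonneg)
    ultimately show ?thesis
      using p Cq i1 by (simp add: ennreal_mult[symmetric] ennreal_plus[symmetric] del: ennreal_plus)
  qed
  have "(\<integral>\<^sup>+y. ennreal (qt L Cq (s, y)) * ennreal (qt L Cq ((s, y) + (t, w))) \<partial>lborel)
     \<le> (\<integral>\<^sup>+y. ennreal (pbold s y * pbold (s+t) (y+w)) + ennreal (Cq * pbold (s+t) (y+w))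
       + ennreal (Cq * pbold s y) + ennreal (Cq\<^sup>2 * ?i y) \<partial>lborel)"
    by (rule nn_integral_mono) (rule pt)
  also have "\<dots> = (\<integral>\<^sup>+y. ennreal (pbold s y * pbold (s+t) (y+w)) \<partial>lborel)
       + (\<integral>\<^sup>+y. ennreal (Cq * pbold (s+t) (y+w)) \<partial>lborel)
       + (\<integral>\<^sup>+y. ennreal (Cq * pbold s y) \<partial>lborel) + (\<integral>\<^sup>+y. ennreal (Cq\<^sup>2 * ?i y) \<partial>lborel)"
    by (simp add: nn_integral_add)
  also have "(\<integral>\<^sup>+y. ennreal (pbold s y * pbold (s+t) (y+w)) \<partial>lborel) \<le> ennreal (pbold (s + (s+t)) w)"
    using nd s st by (intro int_pbold_conv) auto
  also have "(\<integral>\<^sup>+y. ennreal (Cq * pbold (s+t) (y+w)) \<partial>lborel) \<le> ennreal Cq"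
  proof -
    have "(\<integral>\<^sup>+y. ennreal (Cq * pbold (s+t) (y+w)) \<partial>lborel) = ennreal Cq * (\<integral>\<^sup>+y. ennreal (pbold (s+t) (y+w)) \<partial>lborel)"
      using Cq by (simp add: ennreal_mult nn_integral_cmult pbold_nonneg)
    also have "\<dots> \<le> ennreal Cq * 1" by (intro mult_left_mono int_pbold_shift st) auto
    finally show ?thesis by simp
  qed
  also have "(\<integral>\<^sup>+y. ennreal (Cq * pbold s y) \<partial>lborel) \<le> ennreal Cq"
  proof -
    have "(\<integral>\<^sup>+y. ennreal (Cq * pbold s y) \<partial>lborel) = ennreal Cq * (\<integral>\<^sup>+y. ennreal (pbold s y) \<partial>lborel)"
      using Cq by (simp add: ennreal_mult nn_integral_cmult pbold_nonneg)
    also have "\<dots> \<le> ennreal Cq * 1" by (intro mult_left_mono int_pbold_le s) auto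
    finally show ?thesis by simp
  qed
  also have "(\<integral>\<^sup>+y. ennreal (Cq\<^sup>2 * ?i y) \<partial>lborel) = ennreal (Cq\<^sup>2)"
  proof -
    have "(\<integral>\<^sup>+y. ennreal (Cq\<^sup>2 * ?i y) \<partial>lborel) = (\<integral>\<^sup>+y. ennreal (Cq\<^sup>2) * indicator {-1/2..1/2::real} y \<partial>lborel)"
      by (intro nn_integral_cong) (auto simp: indicator_def)
    also have "\<dots> = ennreal (Cq\<^sup>2)" by (simp add: nn_integral_cmult_indicator)
    finally show ?thesis .
  qed
  finally show ?thesis
    using Cq by (simp add: ennreal_plus[symmetric] pbold_nonneg add.assoc del: ennreal_plus)
qed


lemma plus_const_borel[measurable]: "(\<lambda>a::real \<times> real. a + c) \<in> borel_measurable borel"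
  by (intro borel_measurable_continuous_onI continuous_intros)

lemma K_single:
  assumes nd: "t \<noteq> 0 \<or> w \<noteq> 0" and Cq: "0 \<le> Cq"
  shows "Kf L Cq (t, w) \<le> (\<integral>\<^sup>+s. indicator {s. 0<s \<and> s<L \<and> 0<s+t \<and> s+t<L} s
            * (ennreal (pbold (2 * s + t) w) + ennreal (2*Cq + Cq\<^sup>2)) \<partial>lborel)"
proof -
  have "Kf L Cq (t, w) = (\<integral>\<^sup>+s. \<integral>\<^sup>+y. ennreal (qt L Cq (s, y)) * ennreal (qt L Cq ((s, y) + (t, w))) \<partial>lborel \<partial>lborel)"
    unfolding Kf_def by (rule nn_integral_lborel_pair) measurable
  also have "\<dots> \<le> (\<integral>\<^sup>+s. indicator {s. 0<s \<and> s<L \<and> 0<s+t \<and> s+t<L} s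
            * (ennreal (pbold (2 * s + t) w) + ennreal (2*Cq + Cq\<^sup>2)) \<partial>lborel)"
  proof (rule nn_integral_mono)
    fix s :: real
    show "(\<integral>\<^sup>+y. ennreal (qt L Cq (s, y)) * ennreal (qt L Cq ((s, y) + (t, w))) \<partial>lborel)
        \<le> indicator {s. 0<s \<and> s<L \<and> 0<s+t \<and> s+t<L} s * (ennreal (pbold (2 * s + t) w) + ennreal (2*Cq + Cq\<^sup>2))"
    proof (cases "0<s \<and> s<L \<and> 0<s+t \<and> s+t<L")
      case True
      then show ?thesis using per_s_bound[OF _ _ _ _ nd Cq, of s L] by simp
    next
      case False
      then have "ennreal (qt L Cq (s, y)) * ennreal (qt L Cq ((s, y) + (t, w))) = 0" for y
        by (auto simp: qt_def)
      then have "(\<integral>\<^sup>+y. ennreal (qt L Cq (s, y)) * ennreal (qt L Cq ((s, y) + (t, w))) \<partial>lborel) = (\<integral>\<^sup>+y. (0::ennreal) \<partial>(lborel::real measure))"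
        by (intro nn_integral_cong) blast
      then show ?thesis by simp
    qed
  qed
  finally show ?thesis .
qed

lemma round_small: assumes "\<bar>x::real\<bar> < 1" shows "round x \<in> {-1..1}"
proof -
  have a: "real_of_int (round x) > -2" "real_of_int (round x) < 2"
    using of_int_round_ge[of x] of_int_round_le[of x] assms by (auto simp: abs_less_iff)
  then have "round x > -2" "round x < 2" by simp_all
  then show ?thesis by auto
qed

lemma sum_pbold:
  assumes x: "\<bar>x\<bar> < 1" and v: "0 < v" "v < 2 * L"
  shows "(\<Sum>m\<in>{-2..2::int}. pbold v (x + of_int m)) \<le> pbold v (dT x) + 32 * L / pi"
proof -
  define m0 where "m0 = - round x"
  have m0: "m0 \<in> {-2..2}" using round_small[OF x] by (auto simp: m0_def)
  have f0: "pbold v (x + of_int m0) = pbold v (dT x)"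
    by (simp add: m0_def dT_red pbold_abs red_def)
  have far: "pbold v (x + of_int m) \<le> 8 * L / pi" if "m \<noteq> m0" for m
  proof -
    have "x + of_int m = red x + of_int (round x + m)" by (simp add: red_def)
    moreover have "round x + m \<le> -1 \<or> 1 \<le> round x + m" using that by (auto simp: m0_def)
    then have "real_of_int (round x + m) \<le> -1 \<or> 1 \<le> real_of_int (round x + m)" by linarith
    ultimately have h: "1/2 \<le> \<bar>x + of_int m\<bar>"
      using aux_abs2[OF _ red_ge[of x] red_lt[of x]] by metis
    have "(1/2)\<^sup>2 \<le> \<bar>x + of_int m\<bar>\<^sup>2" by (rule power_mono[OF h]) simp
    then have h2: "1/4 \<le> (x + of_int m)\<^sup>2" by (simp add: power2_eq_square)
    have "pbold v (x + of_int m) = v / (pi * ((x + of_int m)\<^sup>2 + v\<^sup>2))" using v by (simp add: pbold_pos)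
    also have "\<dots> \<le> v / (pi * (1/4))"
      by (rule frac_le) (use v h2 in \<open>auto intro!: mult_left_mono simp: add_increasing2\<close>)
    also have "\<dots> \<le> 8 * L / pi" using v by (simp add: field_simps)
    finally show ?thesis .
  qed
  have "(\<Sum>m\<in>{-2..2::int}. pbold v (x + of_int m))
      = pbold v (x + of_int m0) + (\<Sum>m\<in>{-2..2::int} - {m0}. pbold v (x + of_int m))"
    by (rule sum.remove[OF _ m0]) simp
  also have "(\<Sum>m\<in>{-2..2::int} - {m0}. pbold v (x + of_int m)) \<le> of_nat (card ({-2..2::int} - {m0})) * (8 * L / pi)"
    by (rule sum_bounded_above) (use far in auto)
  also have "card ({-2..2::int} - {m0}) = 4" using m0 by (simp add: card_Diff_singleton)
  finally show ?thesis using f0 by simp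
qed


lemma dT_nz: assumes "\<bar>x\<bar> < 1" "x \<noteq> 0" shows "dT x \<noteq> 0"
proof
  assume "dT x = 0"
  then have "x = real_of_int (round x)" by (simp add: dT_def)
  moreover have "round x = -1 \<or> round x = 0 \<or> round x = 1" using round_small[OF assms(1)] by auto
  ultimately show False using assms by auto
qed

lemma Ksum_bound:
  assumes x: "\<bar>x\<bar> < 1" and nd: "t \<noteq> 0 \<or> x \<noteq> 0" and Cq: "0 \<le> Cq" and L: "0 < L"
  shows "(\<Sum>m\<in>{-2..2::int}. Kf L Cq (t, x + of_int m))
     \<le> ennreal (L * (32 * L / pi + 5 * (2*Cq + Cq\<^sup>2)))
       + ennreal (1/2) * ennreal (if \<bar>t\<bar> \<le> 2 * L then (ln ((dT x)\<^sup>2 + (2 * L)\<^sup>2) - ln ((dT x)\<^sup>2 + t\<^sup>2)) / (2 * pi) else 0)"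
proof -
  define I where "I = (\<lambda>s. indicator {s. 0<s \<and> s<L \<and> 0<s+t \<and> s+t<L} s :: ennreal)"
  define c2 where "c2 = 2*Cq + Cq\<^sup>2"
  have c2: "0 \<le> c2" using Cq by (simp add: c2_def)
  define c4 where "c4 = 32 * L / pi + 5 * c2"
  have c4: "0 \<le> c4" using c2 L by (simp add: c4_def)
  define d where "d = dT x"
  have ndm: "t \<noteq> 0 \<or> x + of_int m \<noteq> 0" if "m \<in> {-2..2}" for m :: int
  proof (cases "t = 0")
    case True
    then have "x \<noteq> 0" using nd by simp
    show ?thesis
    proof (rule disjI2, rule notI)
      assume h: "x + of_int m = 0"
      then have "\<bar>real_of_int m\<bar> < 1" using x by simp
      then have "m = 0" by linarith
      then show False using h \<open>x \<noteq> 0\<close> by simp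
    qed
  qed simp
  have "(\<Sum>m\<in>{-2..2::int}. Kf L Cq (t, x + of_int m))
      \<le> (\<Sum>m\<in>{-2..2::int}. \<integral>\<^sup>+s. I s * (ennreal (pbold (2 * s + t) (x + of_int m)) + ennreal c2) \<partial>lborel)"
    by (rule sum_mono) (use K_single[OF ndm Cq] in \<open>simp add: I_def c2_def\<close>)
  also have "\<dots> = (\<integral>\<^sup>+s. (\<Sum>m\<in>{-2..2::int}. I s * (ennreal (pbold (2 * s + t) (x + of_int m)) + ennreal c2)) \<partial>lborel)"
    by (rule nn_integral_sum[symmetric]) (simp add: I_def)
  also have "\<dots> \<le> (\<integral>\<^sup>+s. I s * ennreal (pbold (2 * s + t) d) + I s * ennreal c4 \<partial>lborel)"
  proof (rule nn_integral_mono)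
    fix s :: real
    show "(\<Sum>m\<in>{-2..2::int}. I s * (ennreal (pbold (2 * s + t) (x + of_int m)) + ennreal c2))
        \<le> I s * ennreal (pbold (2 * s + t) d) + I s * ennreal c4"
    proof (cases "0<s \<and> s<L \<and> 0<s+t \<and> s+t<L")
      case False then show ?thesis by (simp add: I_def)
    next
      case True
      then have v: "0 < 2 * s + t" "2 * s + t < 2 * L" by auto
      have "(\<Sum>m\<in>{-2..2::int}. I s * (ennreal (pbold (2 * s + t) (x + of_int m)) + ennreal c2))
          = ennreal (\<Sum>m\<in>{-2..2::int}. pbold (2 * s + t) (x + of_int m) + c2)"
        using True c2 by (simp add: I_def ennreal_plus[symmetric] pbold_nonneg sum_nonneg
            del: ennreal_plus)
      also have "\<dots> \<le> ennreal (pbold (2 * s + t) d + c4)"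
      proof (rule ennreal_leI)
        have "(\<Sum>m\<in>{-2..2::int}. pbold (2 * s + t) (x + of_int m) + c2)
            = (\<Sum>m\<in>{-2..2::int}. pbold (2 * s + t) (x + of_int m)) + 5 * c2"
          by (simp add: sum.distrib)
        also have "\<dots> \<le> pbold (2 * s + t) d + 32 * L / pi + 5 * c2"
          using sum_pbold[OF x v] by (simp add: d_def)
        finally show "(\<Sum>m\<in>{-2..2::int}. pbold (2 * s + t) (x + of_int m) + c2) \<le> pbold (2 * s + t) d + c4"
          by (simp add: c4_def)
      qed
      also have "\<dots> = I s * ennreal (pbold (2 * s + t) d) + I s * ennreal c4"
        using True c4 by (simp add: I_def ennreal_plus pbold_nonneg)
      finally show ?thesis .
    qed
  qed
  also have "\<dots> = (\<integral>\<^sup>+s. I s * ennreal (pbold (2 * s + t) d) \<partial>lborel) + (\<integral>\<^sup>+s. I s * ennreal c4 \<partial>lborel)"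
    by (rule nn_integral_add) (auto simp: I_def)
  also have "(\<integral>\<^sup>+s. I s * ennreal c4 \<partial>lborel) \<le> ennreal (L * c4)"
  proof -
    have "(\<integral>\<^sup>+s. I s * ennreal c4 \<partial>lborel) \<le> (\<integral>\<^sup>+s. ennreal c4 * indicator {0..L} s \<partial>lborel)"
      by (intro nn_integral_mono) (auto simp: I_def indicator_def)
    also have "\<dots> = ennreal c4 * ennreal L" using L by (simp add: nn_integral_cmult_indicator)
    also have "\<dots> = ennreal (L * c4)" using c4 L by (simp add: ennreal_mult[symmetric] mult.commute)
    finally show ?thesis .
  qed
  also have "(\<integral>\<^sup>+s. I s * ennreal (pbold (2 * s + t) d) \<partial>lborel)
      \<le> ennreal (1/2) * ennreal (if \<bar>t\<bar> \<le> 2 * L then (ln (d\<^sup>2 + (2 * L)\<^sup>2) - ln (d\<^sup>2 + t\<^sup>2)) / (2 * pi) else 0)"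
  proof -
    let ?g = "\<lambda>v. ennreal (pbold v d) * indicator {\<bar>t\<bar>..2*L} v"
    have "(\<integral>\<^sup>+s. I s * ennreal (pbold (2 * s + t) d) \<partial>lborel) \<le> (\<integral>\<^sup>+s. ?g (t + 2 * s) \<partial>lborel)"
      by (intro nn_integral_mono) (auto simp: I_def indicator_def add.commute)
    also have "\<dots> = ennreal (1/2) * (\<integral>\<^sup>+v. ?g v \<partial>lborel)"
    proof -
      have "(\<integral>\<^sup>+v. ?g v \<partial>lborel) = \<bar>2::real\<bar> * (\<integral>\<^sup>+s. ?g (t + 2 * s) \<partial>lborel)"
        by (rule nn_integral_real_affine) auto
      then have "ennreal (1/2) * (\<integral>\<^sup>+v. ?g v \<partial>lborel) = (ennreal (1/2) * ennreal 2) * (\<integral>\<^sup>+s. ?g (t + 2 * s) \<partial>lborel)"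
        by (simp add: mult.assoc)
      also have "ennreal (1/2) * ennreal 2 = ennreal (1/2 * 2)" by (rule ennreal_mult[symmetric]) auto
      also have "ennreal (1/2 * 2) = 1" by simp
      finally show ?thesis by simp
    qed
    also have "(\<integral>\<^sup>+v. ?g v \<partial>lborel) = ennreal (if \<bar>t\<bar> \<le> 2 * L then (ln (d\<^sup>2 + (2 * L)\<^sup>2) - ln (d\<^sup>2 + t\<^sup>2)) / (2 * pi) else 0)"
    proof (cases "\<bar>t\<bar> \<le> 2 * L")
      case True
      have "0 < \<bar>t\<bar> \<or> d \<noteq> 0" using nd dT_nz[OF x] by (auto simp: d_def)
      then show ?thesis using True int_pbold_time[of "\<bar>t\<bar>" "2*L" d] by (simp add: power2_abs)
    next
      case False
      then have "?g v = 0" for v by (simp add: indicator_def)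
      then show ?thesis using False by simp
    qed
    finally show ?thesis .
  qed
  finally have X: "(\<Sum>m\<in>{-2..2::int}. Kf L Cq (t, x + of_int m))
     \<le> ennreal (1/2) * ennreal (if \<bar>t\<bar> \<le> 2 * L then (ln (d\<^sup>2 + (2 * L)\<^sup>2) - ln (d\<^sup>2 + t\<^sup>2)) / (2 * pi) else 0)
       + ennreal (L * c4)" by (simp add: add_left_mono add_right_mono)
  have E: "ennreal (L * c4) + ennreal (1/2) * ennreal (if \<bar>t\<bar> \<le> 2 * L then (ln (d\<^sup>2 + (2 * L)\<^sup>2) - ln (d\<^sup>2 + t\<^sup>2)) / (2 * pi) else 0)
    = ennreal (1/2) * ennreal (if \<bar>t\<bar> \<le> 2 * L then (ln (d\<^sup>2 + (2 * L)\<^sup>2) - ln (d\<^sup>2 + t\<^sup>2)) / (2 * pi) else 0) + ennreal (L * c4)"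
    by (rule add.commute)
  show ?thesis unfolding d_def[symmetric] c2_def[symmetric] c4_def[symmetric] E by (rule X)
qed

lemma ennreal_integral_le:
  fixes f :: "'a \<Rightarrow> real"
  assumes nn: "\<And>x. 0 \<le> f x" and le: "\<And>x. ennreal (f x) \<le> G x"
  shows "ennreal (integral\<^sup>L M f) \<le> integral\<^sup>N M G"
proof (cases "integrable M f")
  case True
  then have "ennreal (integral\<^sup>L M f) = (\<integral>\<^sup>+x. ennreal (f x) \<partial>M)"
    using nn by (subst nn_integral_eq_integral) auto
  also have "\<dots> \<le> integral\<^sup>N M G" by (intro nn_integral_mono le)
  finally show ?thesis .
next
  case False then show ?thesis by (simp add: not_integrable_integral_eq)
qed

lemma nn_integral_lborel_plus:
  fixes f :: "'a::euclidean_space \<Rightarrow> ennreal"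
  assumes [measurable]: "f \<in> borel_measurable borel"
  shows "(\<integral>\<^sup>+y. f (c + y) \<partial>lborel) = (\<integral>\<^sup>+y. f y \<partial>lborel)"
proof -
  have "(\<integral>\<^sup>+y. f y \<partial>lborel) = (\<integral>\<^sup>+y. f y \<partial>distr lborel borel ((+) c))"
    by (simp add: lborel_distr_plus)
  also have "\<dots> = (\<integral>\<^sup>+y. f (c + y) \<partial>lborel)"
    by (rule nn_integral_distr) auto
  finally show ?thesis ..
qed

lemma nn_integral_lborel_reflect:
  fixes f :: "'a::euclidean_space \<Rightarrow> ennreal"
  assumes [measurable]: "f \<in> borel_measurable borel"
  shows "(\<integral>\<^sup>+y. f (c - y) \<partial>lborel) = (\<integral>\<^sup>+y. f y \<partial>lborel)"
proof -
  have "(\<integral>\<^sup>+y. f y \<partial>lborel)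
      = (\<integral>\<^sup>+y. f y \<partial>density (distr lborel borel (\<lambda>x. c + (-1) *\<^sub>R x)) (\<lambda>_. \<bar>-1::real\<bar> ^ DIM('a)))"
    by (subst lborel_affine[of "-1" c, symmetric]) auto
  also have "\<dots> = (\<integral>\<^sup>+y. f (c - y) \<partial>lborel)"
    by (simp add: nn_integral_density nn_integral_distr)
  finally show ?thesis ..
qed

lemma red_measurable[measurable]: "red \<in> borel_measurable borel"
proof -
  have "red = (\<lambda>x. x - real_of_int \<lfloor>x + 1/2\<rfloor>)" by (auto simp: red_def round_def)
  moreover have "(\<lambda>x::real. x - real_of_int \<lfloor>x + 1/2\<rfloor>) \<in> borel_measurable borel" by measurable
  ultimately show ?thesis by simp
qed

context rhoL
begin

lemma rho_measurable[measurable]: "\<rho> \<in> borel_measurable borel"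
  by (rule borel_measurable_continuous_onI[OF cont])

lemma rt_measurable[measurable]: "rt e \<in> borel_measurable borel"
  unfolding rt_def by measurable

lemma RR_measurable[measurable]: "RR e \<in> borel_measurable borel"
  unfolding RR_def by measurable

definition SS :: "(real \<times> real) set" where "SS = UNIV \<times> {-1/2..<1/2}"

lemma SS_borel[measurable]: "SS \<in> sets borel"
  unfolding SS_def by (simp add: borel_prod[symmetric])

definition VV :: "real \<Rightarrow> real \<Rightarrow> real \<Rightarrow> real \<times> real \<Rightarrow> ennreal" where
  "VV L Cq e w = (\<integral>\<^sup>+a. indicator SS a * ennreal (qt L Cq a) * ennreal (RR e (w - a)) \<partial>lborel)"

lemma tint_eq: "tint f = integral\<^sup>L lborel (\<lambda>w. indicator SS w * f w)"
  by (simp add: tint_def set_lebesgue_integral_def SS_def)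

lemma Qeps_le_V:
  assumes e: "0 < e" "e < 1" and fnn: "\<And>a. 0 \<le> f a" and fle: "\<And>a. a \<in> SS \<Longrightarrow> f a \<le> qt L Cq a"
    and Cq: "0 \<le> Cq"
  shows "ennreal (let v = tconv f (rho_eps \<rho> e) in tint (\<lambda>w. v w * v (z + w)))
     \<le> (\<integral>\<^sup>+w. indicator SS w * VV L Cq e w * VV L Cq e (z + w) \<partial>lborel)"
proof -
  define v where "v = tconv f (rho_eps \<rho> e)"
  have v_eq: "v w = integral\<^sup>L lborel (\<lambda>a. indicator SS a * (f a * RR e (w - a)))" for w
    by (simp add: v_def tconv_def tint_eq rho_eps_eq[OF e])
  have vnn: "0 \<le> v w" for w
    unfolding v_eq by (intro integral_nonneg_AE AE_I2) (simp add: fnn RR_nonneg)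
  have vle: "ennreal (v w) \<le> VV L Cq e w" for w
    unfolding v_eq VV_def
  proof (rule ennreal_integral_le)
    fix a
    show "0 \<le> indicator SS a * (f a * RR e (w - a))" by (simp add: fnn RR_nonneg)
    show "ennreal (indicator SS a * (f a * RR e (w - a))) \<le> indicator SS a * ennreal (qt L Cq a) * ennreal (RR e (w - a))"
    proof (cases "a \<in> SS")
      case True
      then have "f a * RR e (w - a) \<le> qt L Cq a * RR e (w - a)"
        using fle by (intro mult_right_mono) (auto simp: RR_nonneg)
      then show ?thesis using True fnn RR_nonneg
        by (simp add: ennreal_mult[symmetric] qt_nonneg Cq)
    qed simp
  qed
  have "ennreal (tint (\<lambda>w. v w * v (z + w)))
      \<le> (\<integral>\<^sup>+w. indicator SS w * VV L Cq e w * VV L Cq e (z + w) \<partial>lborel)"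
    unfolding tint_eq
  proof (rule ennreal_integral_le)
    fix w
    show "0 \<le> indicator SS w * (v w * v (z + w))" by (simp add: vnn)
    have "ennreal (indicator SS w * (v w * v (z + w))) = indicator SS w * (ennreal (v w) * ennreal (v (z + w)))"
      by (simp add: ennreal_mult vnn indicator_def)
    also have "\<dots> \<le> indicator SS w * (VV L Cq e w * VV L Cq e (z + w))"
      by (intro mult_left_mono mult_mono vle) auto
    finally show "ennreal (indicator SS w * (v w * v (z + w))) \<le> indicator SS w * VV L Cq e w * VV L Cq e (z + w)"
      by (simp add: mult.assoc)
  qed
  then show ?thesis by (simp add: v_def Let_def)
qed

lemma RR_shift: "RR e (p + (0, real_of_int n)) = RR e p"
  by (cases p) (simp add: RR_def)

definition zred :: "real \<times> real \<Rightarrow> real \<times> real" where "zred z = (fst z, red (snd z))"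

lemma VV_zred: "VV L Cq e (z + w) = VV L Cq e (zred z + w)"
proof -
  have "RR e (z + w - a) = RR e (zred z + w - a)" for a
  proof -
    have h: "z + w - a = (zred z + w - a) + (0, real_of_int (round (snd z)))"
      by (cases z) (simp add: zred_def red_def)
    show ?thesis unfolding h by (rule RR_shift)
  qed
  then show ?thesis by (simp add: VV_def)
qed

lemma tonelli_V:
  assumes Cq: "0 \<le> Cq"
  shows "(\<integral>\<^sup>+w. indicator SS w * VV L Cq e w * VV L Cq e (c + w) \<partial>lborel)
    = (\<integral>\<^sup>+a. \<integral>\<^sup>+b. (indicator SS a * ennreal (qt L Cq a)) * (indicator SS b * ennreal (qt L Cq b))
         * (\<integral>\<^sup>+w. indicator SS w * ennreal (RR e (w - a)) * ennreal (RR e (c + w - b)) \<partial>lborel) \<partial>lborel \<partial>lborel)"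
proof -
  define F where "F w a = indicator SS a * ennreal (qt L Cq a) * ennreal (RR e (w - a))" for w a
  define G where "G w b = indicator SS b * ennreal (qt L Cq b) * ennreal (RR e (c + w - b))" for w b
  have [measurable]: "case_prod F \<in> borel_measurable (lborel \<Otimes>\<^sub>M lborel)" unfolding F_def by measurable
  have [measurable]: "case_prod G \<in> borel_measurable (lborel \<Otimes>\<^sub>M lborel)" unfolding G_def by measurable
  have Fm[measurable]: "F w \<in> borel_measurable borel" for w unfolding F_def by measurable
  have Gm[measurable]: "G w \<in> borel_measurable borel" for w unfolding G_def by measurable
  have VF: "VV L Cq e w = (\<integral>\<^sup>+a. F w a \<partial>lborel)" for w by (simp add: VV_def F_def)
  have VG: "VV L Cq e (c + w) = (\<integral>\<^sup>+b. G w b \<partial>lborel)" for w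
    by (simp add: VV_def G_def add.assoc)
  have "indicator SS w * VV L Cq e w * VV L Cq e (c + w)
      = (\<integral>\<^sup>+a. \<integral>\<^sup>+b. indicator SS w * F w a * G w b \<partial>lborel \<partial>lborel)" for w
  proof -
    have e1: "indicator SS w * VV L Cq e w * VV L Cq e (c + w)
        = indicator SS w * (\<integral>\<^sup>+a. F w a \<partial>lborel) * (\<integral>\<^sup>+b. G w b \<partial>lborel)"
      by (subst VG) (subst VF, rule refl)
    have "indicator SS w * VV L Cq e w * VV L Cq e (c + w)
        = (\<integral>\<^sup>+a. indicator SS w * F w a * (\<integral>\<^sup>+b. G w b \<partial>lborel) \<partial>lborel)"
      unfolding e1
      by (subst nn_integral_cmult[symmetric], measurable, subst nn_integral_multc[symmetric], measurable)
    also have "\<dots> = (\<integral>\<^sup>+a. \<integral>\<^sup>+b. indicator SS w * F w a * G w b \<partial>lborel \<partial>lborel)"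
      by (intro nn_integral_cong, subst nn_integral_cmult[symmetric]) auto
    finally show ?thesis .
  qed
  then have "(\<integral>\<^sup>+w. indicator SS w * VV L Cq e w * VV L Cq e (c + w) \<partial>lborel)
      = (\<integral>\<^sup>+w. \<integral>\<^sup>+a. \<integral>\<^sup>+b. indicator SS w * F w a * G w b \<partial>lborel \<partial>lborel \<partial>lborel)"
    by simp
  also have "\<dots> = (\<integral>\<^sup>+a. \<integral>\<^sup>+w. \<integral>\<^sup>+b. indicator SS w * F w a * G w b \<partial>lborel \<partial>lborel \<partial>lborel)"
    by (rule lborel_pair.Fubini') (unfold F_def G_def, measurable)
  also have "\<dots> = (\<integral>\<^sup>+a. \<integral>\<^sup>+b. \<integral>\<^sup>+w. indicator SS w * F w a * G w b \<partial>lborel \<partial>lborel \<partial>lborel)"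
    by (intro nn_integral_cong lborel_pair.Fubini') (unfold F_def G_def, measurable)
  also have "\<dots> = (\<integral>\<^sup>+a. \<integral>\<^sup>+b. (indicator SS a * ennreal (qt L Cq a)) * (indicator SS b * ennreal (qt L Cq b))
         * (\<integral>\<^sup>+w. indicator SS w * ennreal (RR e (w - a)) * ennreal (RR e (c + w - b)) \<partial>lborel) \<partial>lborel \<partial>lborel)"
  proof (intro nn_integral_cong)
    fix a b
    have "(\<integral>\<^sup>+w. indicator SS w * F w a * G w b \<partial>lborel)
        = (\<integral>\<^sup>+w. ((indicator SS a * ennreal (qt L Cq a)) * (indicator SS b * ennreal (qt L Cq b)))
              * (indicator SS w * ennreal (RR e (w - a)) * ennreal (RR e (c + w - b))) \<partial>lborel)"
      by (intro nn_integral_cong) (simp add: F_def G_def ac_simps)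
    also have "\<dots> = (indicator SS a * ennreal (qt L Cq a)) * (indicator SS b * ennreal (qt L Cq b))
         * (\<integral>\<^sup>+w. indicator SS w * ennreal (RR e (w - a)) * ennreal (RR e (c + w - b)) \<partial>lborel)"
      by (rule nn_integral_cmult) measurable
    finally show "(\<integral>\<^sup>+w. indicator SS w * F w a * G w b \<partial>lborel) = \<dots>" .
  qed
  finally show ?thesis .
qed

end

lemma round_small2: assumes "\<bar>x::real\<bar> < 5/2" shows "round x \<in> {-2..2}"
proof -
  have a: "real_of_int (round x) > -3" "real_of_int (round x) < 3"
    using of_int_round_ge[of x] of_int_round_le[of x] assms by (auto simp: abs_less_iff)
  then have "round x > -3" "round x < 3" by simp_all
  then show ?thesis by auto
qed

lemma aux_abs3: "\<bar>c::real\<bar> \<le> 1/2 \<Longrightarrow> \<bar>y\<bar> < 1/4 \<Longrightarrow> -1/2 \<le> b \<Longrightarrow> b < 1/2 \<Longrightarrow> -1/2 \<le> a \<Longrightarrow> a < 1/2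
   \<Longrightarrow> \<bar>c + a + y - b\<bar> < 5/2"
  by (auto simp: abs_if split: if_split_asm)

context rhoL
begin

lemma RR_as_rt: "RR e p = rt e (p + (0, - real_of_int (round (snd p))))"
  by (cases p) (simp add: RR_def red_def)

lemma SS_snd: "a \<in> SS \<Longrightarrow> - 1/2 \<le> snd a \<and> snd a < 1/2"
  by (auto simp: SS_def)

lemma W_bound:
  assumes a: "a \<in> SS"
  shows "(\<integral>\<^sup>+w. indicator SS w * ennreal (RR e (w - a)) * ennreal (RR e (c + w - b)) \<partial>lborel)
     \<le> (\<integral>\<^sup>+y. ennreal (rt e y) * ennreal (RR e (c + a - b + y)) \<partial>lborel)"
proof -
  define G where "G y = ennreal (rt e (y - a)) * ennreal (RR e (c + y - b))" for y
  have Gm[measurable]: "G \<in> borel_measurable borel" unfolding G_def by measurable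
  have pt: "indicator SS w * ennreal (RR e (w - a)) * ennreal (RR e (c + w - b))
      \<le> (\<Sum>k\<in>{-1..1::int}. indicator SS w * G (w + (0, real_of_int k)))" for w
  proof (cases "w \<in> SS")
    case False then show ?thesis by simp
  next
    case True
    define k0 where "k0 = - round (snd (w - a))"
    have "\<bar>snd (w - a)\<bar> < 1" using SS_snd[OF True] SS_snd[OF a] by auto
    then have k0: "k0 \<in> {-1..1}" using round_small by (force simp: k0_def)
    have "RR e (w - a) = rt e ((w + (0, real_of_int k0)) - a)"
      by (subst RR_as_rt) (simp add: k0_def algebra_simps)
    moreover have "RR e (c + w - b) = RR e (c + (w + (0, real_of_int k0)) - b)"
      using RR_shift[of e "c + w - b" k0] by (simp add: algebra_simps)
    ultimately have "indicator SS w * ennreal (RR e (w - a)) * ennreal (RR e (c + w - b))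
        = indicator SS w * G (w + (0, real_of_int k0))"
      by (simp add: G_def mult.assoc)
    also have "\<dots> \<le> (\<Sum>k\<in>{-1..1::int}. indicator SS w * G (w + (0, real_of_int k)))"
      by (rule member_le_sum[OF k0]) auto
    finally show ?thesis .
  qed
  have "(\<integral>\<^sup>+w. indicator SS w * ennreal (RR e (w - a)) * ennreal (RR e (c + w - b)) \<partial>lborel)
      \<le> (\<integral>\<^sup>+w. (\<Sum>k\<in>{-1..1::int}. indicator SS w * G (w + (0, real_of_int k))) \<partial>lborel)"
    by (intro nn_integral_mono pt)
  also have "\<dots> = (\<Sum>k\<in>{-1..1::int}. \<integral>\<^sup>+w. indicator SS w * G (w + (0, real_of_int k)) \<partial>lborel)"
    by (rule nn_integral_sum) auto
  also have "\<dots> = (\<Sum>k\<in>{-1..1::int}. \<integral>\<^sup>+y. indicator SS (y - (0, real_of_int k)) * G y \<partial>lborel)"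
  proof (rule sum.cong[OF refl])
    fix k :: int
    have "(\<integral>\<^sup>+y. (\<lambda>y. indicator SS (y - (0, real_of_int k)) * G y) ((0, real_of_int k) + y) \<partial>lborel)
        = (\<integral>\<^sup>+y. indicator SS (y - (0, real_of_int k)) * G y \<partial>lborel)"
      by (rule nn_integral_lborel_plus) measurable
    then show "(\<integral>\<^sup>+w. indicator SS w * G (w + (0, real_of_int k)) \<partial>lborel)
        = (\<integral>\<^sup>+y. indicator SS (y - (0, real_of_int k)) * G y \<partial>lborel)"
      by (simp add: add.commute)
  qed
  also have "\<dots> = (\<integral>\<^sup>+y. (\<Sum>k\<in>{-1..1::int}. indicator SS (y - (0, real_of_int k))) * G y \<partial>lborel)"
    by (subst nn_integral_sum[symmetric]) (auto simp: sum_distrib_right)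
  also have "\<dots> \<le> (\<integral>\<^sup>+y. G y \<partial>lborel)"
  proof (rule nn_integral_mono)
    fix y :: "real \<times> real"
    have "(\<Sum>k\<in>{-1..1::int}. indicator SS (y - (0, real_of_int k)) :: ennreal) \<le> 1"
    proof -
      have iff: "y - (0, real_of_int k) \<in> SS \<longleftrightarrow> k = round (snd y)" for k
      proof -
        have m: "y - (0, real_of_int k) \<in> SS \<longleftrightarrow> -1/2 \<le> snd y - real_of_int k \<and> snd y - real_of_int k < 1/2"
          by (cases y) (simp add: SS_def)
        have r: "k = round (snd y) \<longleftrightarrow> -1/2 \<le> snd y - real_of_int k \<and> snd y - real_of_int k < 1/2"
        proof
          assume "k = round (snd y)"
          then show "-1/2 \<le> snd y - real_of_int k \<and> snd y - real_of_int k < 1/2"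
            using of_int_round_gt[of "snd y"] of_int_round_le[of "snd y"] by auto
        next
          assume "-1/2 \<le> snd y - real_of_int k \<and> snd y - real_of_int k < 1/2"
          then show "k = round (snd y)" by (intro round_unique[symmetric]) auto
        qed
        show ?thesis using m r by simp
      qed
      have "(\<Sum>k\<in>{-1..1::int}. indicator SS (y - (0, real_of_int k)) :: ennreal)
          = (\<Sum>k\<in>{-1..1::int}. if k = round (snd y) then 1 else 0)"
        by (intro sum.cong refl) (simp add: indicator_def iff)
      also have "\<dots> \<le> 1" by (simp add: sum.delta)
      finally show ?thesis .
    qed
    then show "(\<Sum>k\<in>{-1..1::int}. indicator SS (y - (0, real_of_int k))) * G y \<le> G y"
      using mult_right_mono[of _ 1 "G y"] by simp
  qed
  also have "(\<integral>\<^sup>+y. G y \<partial>lborel) = (\<integral>\<^sup>+y. G (a + y) \<partial>lborel)"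
    by (rule nn_integral_lborel_plus[symmetric]) measurable
  also have "\<dots> = (\<integral>\<^sup>+y. ennreal (rt e y) * ennreal (RR e (c + a - b + y)) \<partial>lborel)"
    by (simp add: G_def algebra_simps)
  finally show ?thesis .
qed


lemma b_bound:
  assumes e: "0 < e" "e < 1" and ry: "rt e y \<noteq> 0" and c: "\<bar>snd c\<bar> \<le> 1/2" and a: "a \<in> SS"
  shows "(\<integral>\<^sup>+b. indicator SS b * ennreal (qt L Cq b) * ennreal (RR e (c + a - b + y)) \<partial>lborel)
    \<le> (\<Sum>m\<in>{-2..2::int}. \<integral>\<^sup>+y'. ennreal (qt L Cq (c + a + y + (0, real_of_int m) - y')) * ennreal (rt e y') \<partial>lborel)"
proof -
  define p where "p = c + a + y"
  have ys: "\<bar>snd y\<bar> < 1/4" using rt_supp(2)[OF e(1) ry] e by simp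
  have pt: "indicator SS b * ennreal (qt L Cq b) * ennreal (RR e (c + a - b + y))
      \<le> (\<Sum>m\<in>{-2..2::int}. ennreal (qt L Cq b) * ennreal (rt e (p + (0, real_of_int m) - b)))" for b
  proof (cases "b \<in> SS")
    case False then show ?thesis by simp
  next
    case True
    define k0 where "k0 = - round (snd (p - b))"
    have "\<bar>snd (p - b)\<bar> < 5/2" using SS_snd[OF True] SS_snd[OF a] aux_abs3[OF c ys] by (simp add: p_def)
    then have k0: "k0 \<in> {-2..2}" using round_small2 by (force simp: k0_def)
    have "RR e (c + a - b + y) = rt e (p + (0, real_of_int k0) - b)"
      by (subst RR_as_rt) (simp add: k0_def p_def algebra_simps)
    then have "indicator SS b * ennreal (qt L Cq b) * ennreal (RR e (c + a - b + y))
        = ennreal (qt L Cq b) * ennreal (rt e (p + (0, real_of_int k0) - b))"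
      using True by simp
    also have "\<dots> \<le> (\<Sum>m\<in>{-2..2::int}. ennreal (qt L Cq b) * ennreal (rt e (p + (0, real_of_int m) - b)))"
      by (rule member_le_sum[OF k0]) auto
    finally show ?thesis .
  qed
  have "(\<integral>\<^sup>+b. indicator SS b * ennreal (qt L Cq b) * ennreal (RR e (c + a - b + y)) \<partial>lborel)
      \<le> (\<integral>\<^sup>+b. (\<Sum>m\<in>{-2..2::int}. ennreal (qt L Cq b) * ennreal (rt e (p + (0, real_of_int m) - b))) \<partial>lborel)"
    by (intro nn_integral_mono pt)
  also have "\<dots> = (\<Sum>m\<in>{-2..2::int}. \<integral>\<^sup>+b. ennreal (qt L Cq b) * ennreal (rt e (p + (0, real_of_int m) - b)) \<partial>lborel)"
    by (rule nn_integral_sum) auto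
  also have "\<dots> = (\<Sum>m\<in>{-2..2::int}. \<integral>\<^sup>+y'. ennreal (qt L Cq (c + a + y + (0, real_of_int m) - y')) * ennreal (rt e y') \<partial>lborel)"
  proof (rule sum.cong[OF refl])
    fix m :: int
    define d where "d = p + (0, real_of_int m)"
    have "(\<integral>\<^sup>+y'. (\<lambda>b. ennreal (qt L Cq b) * ennreal (rt e (d - b))) (d - y') \<partial>lborel)
        = (\<integral>\<^sup>+b. ennreal (qt L Cq b) * ennreal (rt e (d - b)) \<partial>lborel)"
      by (rule nn_integral_lborel_reflect) measurable
    then show "(\<integral>\<^sup>+b. ennreal (qt L Cq b) * ennreal (rt e (p + (0, real_of_int m) - b)) \<partial>lborel)
        = (\<integral>\<^sup>+y'. ennreal (qt L Cq (c + a + y + (0, real_of_int m) - y')) * ennreal (rt e y') \<partial>lborel)"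
      by (simp add: d_def p_def)
  qed
  finally show ?thesis .
qed


lemma main_chain:
  assumes e: "0 < e" "e < 1" and c: "\<bar>snd c\<bar> \<le> 1/2" and Cq: "0 \<le> Cq"
  shows "(\<integral>\<^sup>+a. \<integral>\<^sup>+b. (indicator SS a * ennreal (qt L Cq a)) * (indicator SS b * ennreal (qt L Cq b))
         * (\<integral>\<^sup>+w. indicator SS w * ennreal (RR e (w - a)) * ennreal (RR e (c + w - b)) \<partial>lborel) \<partial>lborel \<partial>lborel)
    \<le> (\<integral>\<^sup>+y. \<integral>\<^sup>+y'. ennreal (rt e y) * ennreal (rt e y')
         * (\<Sum>m\<in>{-2..2::int}. Kf L Cq (c + y - y' + (0, real_of_int m))) \<partial>lborel \<partial>lborel)"
proof -
  define qa where "qa a = indicator SS a * ennreal (qt L Cq a)" for a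
  have qam[measurable]: "qa \<in> borel_measurable borel" unfolding qa_def by measurable
  have qa_le: "qa a \<le> ennreal (qt L Cq a)" for a by (simp add: qa_def indicator_def)
  have "(\<integral>\<^sup>+a. \<integral>\<^sup>+b. qa a * qa b
         * (\<integral>\<^sup>+w. indicator SS w * ennreal (RR e (w - a)) * ennreal (RR e (c + w - b)) \<partial>lborel) \<partial>lborel \<partial>lborel)
      \<le> (\<integral>\<^sup>+a. \<integral>\<^sup>+b. \<integral>\<^sup>+y. qa a * qa b * (ennreal (rt e y) * ennreal (RR e (c + a - b + y))) \<partial>lborel \<partial>lborel \<partial>lborel)"
  proof (intro nn_integral_mono)
    fix a b
    show "qa a * qa b * (\<integral>\<^sup>+w. indicator SS w * ennreal (RR e (w - a)) * ennreal (RR e (c + w - b)) \<partial>lborel)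
        \<le> (\<integral>\<^sup>+y. qa a * qa b * (ennreal (rt e y) * ennreal (RR e (c + a - b + y))) \<partial>lborel)"
    proof (cases "a \<in> SS")
      case True
      then show ?thesis
        by (subst nn_integral_cmult) (auto intro!: mult_left_mono W_bound)
    next
      case False then show ?thesis by (simp add: qa_def)
    qed
  qed
  also have "\<dots> = (\<integral>\<^sup>+a. \<integral>\<^sup>+y. \<integral>\<^sup>+b. qa a * qa b * (ennreal (rt e y) * ennreal (RR e (c + a - b + y))) \<partial>lborel \<partial>lborel \<partial>lborel)"
    by (intro nn_integral_cong lborel_pair.Fubini') measurable
  also have "\<dots> \<le> (\<integral>\<^sup>+a. \<integral>\<^sup>+y. (\<Sum>m\<in>{-2..2::int}. \<integral>\<^sup>+y'. ennreal (qt L Cq a) * ennreal (rt e y) *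
          (ennreal (qt L Cq (a + (c + y - y' + (0, real_of_int m)))) * ennreal (rt e y')) \<partial>lborel) \<partial>lborel \<partial>lborel)"
  proof (intro nn_integral_mono)
    fix a y
    show "(\<integral>\<^sup>+b. qa a * qa b * (ennreal (rt e y) * ennreal (RR e (c + a - b + y))) \<partial>lborel)
        \<le> (\<Sum>m\<in>{-2..2::int}. \<integral>\<^sup>+y'. ennreal (qt L Cq a) * ennreal (rt e y) *
          (ennreal (qt L Cq (a + (c + y - y' + (0, real_of_int m)))) * ennreal (rt e y')) \<partial>lborel)"
    proof (cases "a \<in> SS \<and> rt e y \<noteq> 0")
      case False
      then have "qa a * qa b * (ennreal (rt e y) * ennreal (RR e (c + a - b + y))) = 0" for b
        by (auto simp: qa_def)
      then have "(\<integral>\<^sup>+b. qa a * qa b * (ennreal (rt e y) * ennreal (RR e (c + a - b + y))) \<partial>lborel)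
          = (\<integral>\<^sup>+b. (0::ennreal) \<partial>(lborel::(real \<times> real) measure))"
        by (intro nn_integral_cong) blast
      then show ?thesis by simp
    next
      case True
      have "(\<integral>\<^sup>+b. qa a * qa b * (ennreal (rt e y) * ennreal (RR e (c + a - b + y))) \<partial>lborel)
          = (qa a * ennreal (rt e y)) * (\<integral>\<^sup>+b. indicator SS b * ennreal (qt L Cq b) * ennreal (RR e (c + a - b + y)) \<partial>lborel)"
        by (subst nn_integral_cmult[symmetric]) (auto simp: qa_def ac_simps intro!: nn_integral_cong)
      also have "\<dots> \<le> (ennreal (qt L Cq a) * ennreal (rt e y)) *
          (\<Sum>m\<in>{-2..2::int}. \<integral>\<^sup>+y'. ennreal (qt L Cq (c + a + y + (0, real_of_int m) - y')) * ennreal (rt e y') \<partial>lborel)"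
        using True by (intro mult_mono qa_le b_bound[OF e _ c]) auto
      also have "\<dots> = (\<Sum>m\<in>{-2..2::int}. \<integral>\<^sup>+y'. ennreal (qt L Cq a) * ennreal (rt e y) *
          (ennreal (qt L Cq (a + (c + y - y' + (0, real_of_int m)))) * ennreal (rt e y')) \<partial>lborel)"
        by (subst sum_distrib_left, intro sum.cong refl, subst nn_integral_cmult[symmetric])
           (auto simp: algebra_simps)
      finally show ?thesis .
    qed
  qed
  also have "\<dots> = (\<integral>\<^sup>+a. \<integral>\<^sup>+y. \<integral>\<^sup>+y'. (\<Sum>m\<in>{-2..2::int}. ennreal (qt L Cq a) * ennreal (rt e y) *
          (ennreal (qt L Cq (a + (c + y - y' + (0, real_of_int m)))) * ennreal (rt e y'))) \<partial>lborel \<partial>lborel \<partial>lborel)"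
    by (intro nn_integral_cong nn_integral_sum[symmetric]) auto
  also have "\<dots> = (\<integral>\<^sup>+y. \<integral>\<^sup>+a. \<integral>\<^sup>+y'. (\<Sum>m\<in>{-2..2::int}. ennreal (qt L Cq a) * ennreal (rt e y) *
          (ennreal (qt L Cq (a + (c + y - y' + (0, real_of_int m)))) * ennreal (rt e y'))) \<partial>lborel \<partial>lborel \<partial>lborel)"
    by (rule lborel_pair.Fubini'[symmetric]) measurable
  also have "\<dots> = (\<integral>\<^sup>+y. \<integral>\<^sup>+y'. \<integral>\<^sup>+a. (\<Sum>m\<in>{-2..2::int}. ennreal (qt L Cq a) * ennreal (rt e y) *
          (ennreal (qt L Cq (a + (c + y - y' + (0, real_of_int m)))) * ennreal (rt e y'))) \<partial>lborel \<partial>lborel \<partial>lborel)"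
    by (intro nn_integral_cong lborel_pair.Fubini'[symmetric]) measurable
  also have "\<dots> = (\<integral>\<^sup>+y. \<integral>\<^sup>+y'. ennreal (rt e y) * ennreal (rt e y')
         * (\<Sum>m\<in>{-2..2::int}. Kf L Cq (c + y - y' + (0, real_of_int m))) \<partial>lborel \<partial>lborel)"
  proof (intro nn_integral_cong)
    fix y y' :: "real \<times> real"
    have "(\<integral>\<^sup>+a. (\<Sum>m\<in>{-2..2::int}. ennreal (qt L Cq a) * ennreal (rt e y) *
          (ennreal (qt L Cq (a + (c + y - y' + (0, real_of_int m)))) * ennreal (rt e y'))) \<partial>lborel)
        = (\<Sum>m\<in>{-2..2::int}. \<integral>\<^sup>+a. (ennreal (rt e y) * ennreal (rt e y')) *
          (ennreal (qt L Cq a) * ennreal (qt L Cq (a + (c + y - y' + (0, real_of_int m))))) \<partial>lborel)"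
      by (subst nn_integral_sum) (auto simp: ac_simps)
    also have "\<dots> = ennreal (rt e y) * ennreal (rt e y') * (\<Sum>m\<in>{-2..2::int}. Kf L Cq (c + y - y' + (0, real_of_int m)))"
      by (subst sum_distrib_left, intro sum.cong refl, subst nn_integral_cmult) (auto simp: Kf_def)
    finally show "(\<integral>\<^sup>+a. (\<Sum>m\<in>{-2..2::int}. ennreal (qt L Cq a) * ennreal (rt e y) *
          (ennreal (qt L Cq (a + (c + y - y' + (0, real_of_int m)))) * ennreal (rt e y'))) \<partial>lborel)
        = ennreal (rt e y) * ennreal (rt e y') * (\<Sum>m\<in>{-2..2::int}. Kf L Cq (c + y - y' + (0, real_of_int m)))" .
  qed
  finally show ?thesis by (simp add: qa_def)
qed

end

lemma dT_le_abs: "dT x \<le> \<bar>x\<bar>"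
  using round_diff_minimal[of x 0] by (simp add: dT_def)

lemma dT_nonneg: "0 \<le> dT x" by (simp add: dT_def)

lemma dT_le_half: "dT x \<le> 1/2"
  using of_int_round_abs_le[of x] by (simp add: dT_def abs_minus_commute)

lemma dT_add: "dT (x + y) \<le> dT x + dT y"
proof -
  have "dT (x + y) \<le> \<bar>(x + y) - real_of_int (round x + round y)\<bar>"
    using round_diff_minimal[of "x + y" "round x + round y"] by (simp add: dT_def)
  also have "\<dots> \<le> dT x + dT y" by (simp add: dT_def abs_triangle_ineq[THEN order_trans] algebra_simps
      abs_triangle_ineq[of "x - real_of_int (round x)" "y - real_of_int (round y)", simplified algebra_simps])
  finally show ?thesis .
qed

lemma dT_minus: "dT (- x) = dT x"
proof -
  have "dT (- x) \<le> dT x"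
    using round_diff_minimal[of "- x" "- round x"] by (simp add: dT_def abs_minus_commute)
  moreover have "dT x \<le> dT (- x)"
    using round_diff_minimal[of "x" "- round (- x)"] by (simp add: dT_def abs_minus_commute)
  ultimately show ?thesis by simp
qed

lemma dT_red_red: "dT (red x) = dT x"
  by (simp add: dT_def red_def round_add_int[of x "- round x", simplified] )

lemma tnorm_add: "tnorm (p + q) \<le> tnorm p + tnorm q"
  using dT_add[of "snd p" "snd q"] abs_triangle_ineq[of "fst p" "fst q"] by (simp add: tnorm_def)

lemma tnorm_minus: "tnorm (- p) = tnorm p"
  by (simp add: tnorm_def dT_minus)

lemma tnorm_nonneg: "0 \<le> tnorm p" by (simp add: tnorm_def dT_nonneg)

lemma lg_scale:
  assumes e: "0 < e" "e < 1"
  shows "lg \<tau> \<le> - ln e + lg (\<tau> / e)"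
proof -
  have le0: "0 \<le> - ln e" using e by simp
  show ?thesis
  proof (cases "\<tau> = 0 \<or> 1 \<le> \<bar>\<tau>\<bar>")
    case True
    then have "lg \<tau> = 0" by (auto simp: lg_def)
    then show ?thesis using le0 lg_nonneg[of "\<tau>/e"] by simp
  next
    case False
    then have t: "0 < \<bar>\<tau>\<bar>" by auto
    have "- ln \<bar>\<tau>\<bar> = - ln e - ln (\<bar>\<tau>\<bar> / e)" using t e by (simp add: ln_div)
    also have "\<dots> \<le> - ln e + lg (\<tau> / e)" using e by (simp add: lg_def abs_divide)
    finally show ?thesis using le0 by (simp add: lg_def)
  qed
qed

lemma int_lg_shift:
  assumes e: "0 < e"
  shows "(\<integral>\<^sup>+s. ennreal (lg ((k - s) / e)) \<partial>lborel) \<le> ennreal (2 * e)"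
proof -
  have "(\<integral>\<^sup>+s. ennreal (lg ((k - s) / e)) \<partial>lborel)
      = \<bar>-e\<bar> * (\<integral>\<^sup>+x. ennreal (lg ((k - (k + (-e) * x)) / e)) \<partial>lborel)"
    using e by (intro nn_integral_real_affine) auto
  also have "\<dots> = ennreal e * (\<integral>\<^sup>+x. ennreal (lg x) \<partial>lborel)" using e by simp
  also have "\<dots> \<le> ennreal e * 2" by (intro mult_left_mono int_lg) auto
  also have "\<dots> = ennreal (2 * e)" using e by (simp add: ennreal_mult' mult.commute)
  finally show ?thesis .
qed


definition A0 :: "real \<Rightarrow> real \<Rightarrow> real" where "A0 L Cq = L * (32 * L / pi + 5 * (2*Cq + Cq\<^sup>2))"
definition A1 :: "real \<Rightarrow> real" where "A1 L = ln (1/4 + 4 * L\<^sup>2) / (4 * pi)"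

lemma A0_nonneg: "0 \<le> L \<Longrightarrow> 0 \<le> Cq \<Longrightarrow> 0 \<le> A0 L Cq" by (simp add: A0_def)

lemma A1_nonneg: assumes "1 \<le> L" shows "0 \<le> A1 L"
proof -
  have "1 \<le> L\<^sup>2" using assms by (simp add: one_le_power)
  then have "1 \<le> 1/4 + 4 * L\<^sup>2" by simp
  then show ?thesis by (simp add: A1_def)
qed

lemma Ksum_shape:
  assumes x: "\<bar>snd u\<bar> < 1" and nd: "fst u \<noteq> 0 \<or> snd u \<noteq> 0" and Cq: "0 \<le> Cq" and L: "0 < L"
  shows "(\<Sum>m\<in>{-2..2::int}. Kf L Cq (u + (0, real_of_int m)))
     \<le> ennreal (A0 L Cq)
       + ennreal (1/2) * ennreal (if \<bar>fst u\<bar> \<le> 2 * L then (ln ((dT (snd u))\<^sup>2 + (2 * L)\<^sup>2) - ln ((dT (snd u))\<^sup>2 + (fst u)\<^sup>2)) / (2 * pi) else 0)"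
proof -
  have "u + (0, real_of_int m) = (fst u, snd u + real_of_int m)" for m by (cases u) simp
  then show ?thesis using Ksum_bound[OF x nd Cq L] by (simp add: A0_def)
qed

lemma half_ennreal_le:
  assumes "X / 2 \<le> Y"
  shows "ennreal (1/2) * ennreal X \<le> ennreal Y"
proof -
  have "ennreal (1/2) * ennreal X = ennreal (1/2 * X)" by (rule ennreal_mult'[symmetric]) simp
  also have "\<dots> \<le> ennreal Y" using assms by (intro ennreal_leI) simp
  finally show ?thesis .
qed

lemma KB2:
  assumes x: "\<bar>snd u\<bar> < 1" and t: "fst u \<noteq> 0" and Cq: "0 \<le> Cq" and L: "1 \<le> L"
  shows "(\<Sum>m\<in>{-2..2::int}. Kf L Cq (u + (0, real_of_int m)))
     \<le> ennreal (A0 L Cq + A1 L + lg (fst u) / (2 * pi))"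
proof -
  define t' where "t' = fst u"
  define d where "d = dT (snd u)"
  have d: "0 \<le> d" "d \<le> 1/2" using dT_nonneg dT_le_half unfolding d_def by blast+
  have F1: "ennreal (1/2) * ennreal (if \<bar>t'\<bar> \<le> 2 * L then (ln (d\<^sup>2 + (2 * L)\<^sup>2) - ln (d\<^sup>2 + t'\<^sup>2)) / (2 * pi) else 0)
      \<le> ennreal (A1 L + lg t' / (2 * pi))"
  proof (rule half_ennreal_le)
    have lgn: "0 \<le> lg t'" by (rule lg_nonneg)
    show "(if \<bar>t'\<bar> \<le> 2 * L then (ln (d\<^sup>2 + (2 * L)\<^sup>2) - ln (d\<^sup>2 + t'\<^sup>2)) / (2 * pi) else 0) / 2
        \<le> A1 L + lg t' / (2 * pi)"
    proof (cases "\<bar>t'\<bar> \<le> 2 * L")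
      case False then show ?thesis using A1_nonneg[OF L] lgn by simp
    next
      case True
      have d2: "d\<^sup>2 \<le> 1/4" using d power_mono[of d "1/2" 2] by (simp add: power2_eq_square)
      have l1: "ln (d\<^sup>2 + (2 * L)\<^sup>2) \<le> ln (1/4 + 4 * L\<^sup>2)"
        using d2 L by (subst ln_le_cancel_iff) (auto simp: power_mult_distrib add_nonneg_pos)
      have tpos: "0 < \<bar>t'\<bar>" using t by (simp add: t'_def)
      have l2: "2 * ln \<bar>t'\<bar> \<le> ln (d\<^sup>2 + t'\<^sup>2)"
      proof -
        have "ln (t'\<^sup>2) = 2 * ln \<bar>t'\<bar>" using ln_realpow[of "\<bar>t'\<bar>" 2] tpos by simp
        then have "2 * ln \<bar>t'\<bar> = ln (t'\<^sup>2)" by simp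
        also have "\<dots> \<le> ln (d\<^sup>2 + t'\<^sup>2)" using tpos by (subst ln_le_cancel_iff) (auto simp: add_nonneg_pos)
        finally show ?thesis .
      qed
      have l3: "- ln \<bar>t'\<bar> \<le> lg t'" by (simp add: lg_def)
      have key: "(ln (d\<^sup>2 + (2 * L)\<^sup>2) - ln (d\<^sup>2 + t'\<^sup>2)) \<le> ln (1/4 + 4 * L\<^sup>2) + 2 * lg t'"
        using l1 l2 l3 by linarith
      then have "(ln (d\<^sup>2 + (2 * L)\<^sup>2) - ln (d\<^sup>2 + t'\<^sup>2)) / (2 * pi) / 2 \<le> (ln (1/4 + 4 * L\<^sup>2) + 2 * lg t') / (4 * pi)"
      proof -
        have "(ln (d\<^sup>2 + (2 * L)\<^sup>2) - ln (d\<^sup>2 + t'\<^sup>2)) / (2 * pi) / 2 = (ln (d\<^sup>2 + (2 * L)\<^sup>2) - ln (d\<^sup>2 + t'\<^sup>2)) / (4 * pi)"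
          by (simp add: divide_divide_eq_left)
        also have "\<dots> \<le> (ln (1/4 + 4 * L\<^sup>2) + 2 * lg t') / (4 * pi)"
          by (rule divide_right_mono[OF key]) simp
        finally show ?thesis .
      qed
      also have "\<dots> = A1 L + lg t' / (2 * pi)" by (simp add: A1_def field_simps)
      finally show ?thesis using True by simp
    qed
  qed
  have F2: "ennreal (A0 L Cq) + ennreal (A1 L + lg t' / (2 * pi)) = ennreal (A0 L Cq + A1 L + lg t' / (2 * pi))"
    using A0_nonneg[of L Cq] A1_nonneg[OF L] lg_nonneg[of t'] L Cq by (simp add: ennreal_plus[symmetric] add.assoc del: ennreal_plus)
  have "(\<Sum>m\<in>{-2..2::int}. Kf L Cq (u + (0, real_of_int m)))
     \<le> ennreal (A0 L Cq)
       + ennreal (1/2) * ennreal (if \<bar>t'\<bar> \<le> 2 * L then (ln (d\<^sup>2 + (2 * L)\<^sup>2) - ln (d\<^sup>2 + t'\<^sup>2)) / (2 * pi) else 0)"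
    unfolding t'_def d_def using L t by (intro Ksum_shape[OF x _ Cq]) auto
  also have "\<dots> \<le> ennreal (A0 L Cq) + ennreal (A1 L + lg t' / (2 * pi))"
    by (rule add_left_mono[OF F1])
  also note F2
  finally show ?thesis by (simp add: t'_def)
qed


lemma KB1:
  assumes x: "\<bar>snd u\<bar> < 1" and b: "0 < \<beta>" "\<beta> \<le> tnorm u" and Cq: "0 \<le> Cq" and L: "1 \<le> L"
  shows "(\<Sum>m\<in>{-2..2::int}. Kf L Cq (u + (0, real_of_int m)))
     \<le> ennreal (A0 L Cq + A1 L + max 0 ((ln 2 - 2 * ln \<beta>) / (4 * pi)))"
proof -
  define t' where "t' = fst u"
  define d where "d = dT (snd u)"
  define R where "R = max 0 ((ln 2 - 2 * ln \<beta>) / (4 * pi))"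
  have d: "0 \<le> d" "d \<le> 1/2" using dT_nonneg dT_le_half unfolding d_def by blast+
  have tn: "tnorm u = \<bar>t'\<bar> + d" by (simp add: tnorm_def t'_def d_def)
  have nd: "fst u \<noteq> 0 \<or> snd u \<noteq> 0"
  proof (rule ccontr)
    assume "\<not> (fst u \<noteq> 0 \<or> snd u \<noteq> 0)"
    then have "tnorm u = 0" by (simp add: tnorm_def dT_def)
    then show False using b by simp
  qed
  have F1: "ennreal (1/2) * ennreal (if \<bar>t'\<bar> \<le> 2 * L then (ln (d\<^sup>2 + (2 * L)\<^sup>2) - ln (d\<^sup>2 + t'\<^sup>2)) / (2 * pi) else 0)
      \<le> ennreal (A1 L + R)"
  proof (rule half_ennreal_le)
    have Rn: "0 \<le> R" by (simp add: R_def)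
    show "(if \<bar>t'\<bar> \<le> 2 * L then (ln (d\<^sup>2 + (2 * L)\<^sup>2) - ln (d\<^sup>2 + t'\<^sup>2)) / (2 * pi) else 0) / 2
        \<le> A1 L + R"
    proof (cases "\<bar>t'\<bar> \<le> 2 * L")
      case False then show ?thesis using A1_nonneg[OF L] Rn by simp
    next
      case True
      have d2: "d\<^sup>2 \<le> 1/4" using d power_mono[of d "1/2" 2] by (simp add: power2_eq_square)
      have l1: "ln (d\<^sup>2 + (2 * L)\<^sup>2) \<le> ln (1/4 + 4 * L\<^sup>2)"
        using d2 L by (subst ln_le_cancel_iff) (auto simp: power_mult_distrib add_nonneg_pos)
      have sq: "\<beta>\<^sup>2 / 2 \<le> d\<^sup>2 + t'\<^sup>2"
      proof -
        have "\<beta>\<^sup>2 \<le> (\<bar>t'\<bar> + d)\<^sup>2" using b tn by (intro power_mono) auto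
        also have "\<dots> \<le> 2 * (d\<^sup>2 + t'\<^sup>2)"
          using zero_le_power2[of "\<bar>t'\<bar> - d"] by (simp add: power2_eq_square algebra_simps)
        finally show ?thesis by simp
      qed
      have bpos: "0 < \<beta>\<^sup>2 / 2" using b by simp
      have l2: "2 * ln \<beta> - ln 2 \<le> ln (d\<^sup>2 + t'\<^sup>2)"
      proof -
        have "ln (\<beta>\<^sup>2 / 2) = 2 * ln \<beta> - ln 2" using b by (simp add: ln_div ln_realpow)
        moreover have "ln (\<beta>\<^sup>2 / 2) \<le> ln (d\<^sup>2 + t'\<^sup>2)"
        proof -
          have p2: "0 < d\<^sup>2 + t'\<^sup>2" using sq bpos by linarith
          show ?thesis using ln_le_cancel_iff[OF bpos p2] sq by simp
        qed
        ultimately show ?thesis by simp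
      qed
      have key: "(ln (d\<^sup>2 + (2 * L)\<^sup>2) - ln (d\<^sup>2 + t'\<^sup>2)) \<le> ln (1/4 + 4 * L\<^sup>2) + (ln 2 - 2 * ln \<beta>)"
        using l1 l2 by linarith
      have "(ln (d\<^sup>2 + (2 * L)\<^sup>2) - ln (d\<^sup>2 + t'\<^sup>2)) / (2 * pi) / 2 = (ln (d\<^sup>2 + (2 * L)\<^sup>2) - ln (d\<^sup>2 + t'\<^sup>2)) / (4 * pi)"
        by (simp add: divide_divide_eq_left)
      also have "\<dots> \<le> (ln (1/4 + 4 * L\<^sup>2) + (ln 2 - 2 * ln \<beta>)) / (4 * pi)"
        by (rule divide_right_mono[OF key]) simp
      also have "\<dots> = A1 L + (ln 2 - 2 * ln \<beta>) / (4 * pi)" by (simp add: A1_def add_divide_distrib)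
      also have "\<dots> \<le> A1 L + R" by (simp add: R_def)
      finally show ?thesis using True by simp
    qed
  qed
  have F2: "ennreal (A0 L Cq) + ennreal (A1 L + R) = ennreal (A0 L Cq + A1 L + R)"
    using A0_nonneg[of L Cq] A1_nonneg[OF L] L Cq by (simp add: R_def ennreal_plus[symmetric] add.assoc del: ennreal_plus)
  have "(\<Sum>m\<in>{-2..2::int}. Kf L Cq (u + (0, real_of_int m)))
     \<le> ennreal (A0 L Cq)
       + ennreal (1/2) * ennreal (if \<bar>t'\<bar> \<le> 2 * L then (ln (d\<^sup>2 + (2 * L)\<^sup>2) - ln (d\<^sup>2 + t'\<^sup>2)) / (2 * pi) else 0)"
    unfolding t'_def d_def using L nd by (intro Ksum_shape[OF x _ Cq]) auto
  also have "\<dots> \<le> ennreal (A0 L Cq) + ennreal (A1 L + R)"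
    by (rule add_left_mono[OF F1])
  also note F2
  finally show ?thesis by (simp add: R_def)
qed

lemma abs_lt_Icc: "\<bar>a::real\<bar> < b \<Longrightarrow> a \<in> {-b..b}"
  by (auto simp: abs_less_iff)

lemma AE_fst_ne: "AE y in (lborel :: (real \<times> real) measure). fst y \<noteq> k"
proof (rule AE_I')
  show "{k} \<times> UNIV \<in> null_sets (lborel :: (real \<times> real) measure)"
  proof -
    have "emeasure (lborel \<Otimes>\<^sub>M lborel) ({k} \<times> (UNIV :: real set)) = emeasure lborel {k} * emeasure lborel (UNIV :: real set)"
      by (rule lborel.emeasure_pair_measure_Times) auto
    then have "emeasure (lborel :: (real \<times> real) measure) ({k} \<times> UNIV) = 0"
      by (simp add: lborel_prod)
    moreover have "{k} \<times> (UNIV :: real set) \<in> sets (lborel :: (real \<times> real) measure)"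
      by (simp add: borel_prod[symmetric])
    ultimately show ?thesis by (simp add: null_sets_def)
  qed
  show "{y \<in> space lborel. \<not> fst y \<noteq> k} \<subseteq> {k} \<times> UNIV" by auto
qed

context rhoL
begin

lemma rho_bdd: "\<exists>M. 0 \<le> M \<and> (\<forall>z. \<rho> z \<le> M)"
proof -
  define K where "K = {-s0..s0} \<times> {-1/4..1/4::real}"
  have "compact K" unfolding K_def by (intro compact_Times compact_Icc)
  then have "compact (\<rho> ` K)"
    using continuous_on_subset[OF cont, of K] compact_continuous_image by blast
  then obtain M where M: "\<forall>x\<in>\<rho> ` K. norm x \<le> M" using compact_imp_bounded bounded_iff by metis
  have "\<rho> z \<le> max 0 M" for z
  proof (cases "\<rho> z = 0")
    case False
    then have "z \<in> K" using supp' by (cases z) (force simp: K_def)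
    then show ?thesis using M by force
  qed simp
  then show ?thesis by (intro exI[of _ "max 0 M"]) auto
qed

lemma rho_integrable: "integrable lborel \<rho>"
  using int1 not_integrable_integral_eq by force

lemma rho_nn_int: "(\<integral>\<^sup>+z. ennreal (\<rho> z) \<partial>lborel) = 1"
  using nn_integral_eq_integral[OF rho_integrable] nonneg int1 by simp

lemma rt_mass:
  assumes e: "0 < e"
  shows "(\<integral>\<^sup>+y. ennreal (rt e y) \<partial>lborel) = 1"
proof -
  have "(\<integral>\<^sup>+y. ennreal (rt e y) \<partial>lborel)
     = (\<integral>\<^sup>+y. ennreal (rt e y) \<partial>density (distr lborel borel (\<lambda>x. 0 + e *\<^sub>R x)) (\<lambda>_. \<bar>e\<bar> ^ DIM(real \<times> real)))"
    using e by (subst lborel_affine[of e 0, symmetric]) auto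
  also have "\<dots> = (\<integral>\<^sup>+x. ennreal (\<bar>e\<bar> ^ DIM(real \<times> real)) * ennreal (rt e (e *\<^sub>R x)) \<partial>lborel)"
    by (simp add: nn_integral_density nn_integral_distr)
  also have "\<dots> = (\<integral>\<^sup>+x. ennreal (\<rho> x) \<partial>lborel)"
  proof (intro nn_integral_cong)
    fix x :: "real \<times> real"
    have "\<bar>e\<bar> ^ DIM(real \<times> real) * rt e (e *\<^sub>R x) = \<rho> x"
      using e by (simp add: rt_def power2_eq_square)
    then show "ennreal (\<bar>e\<bar> ^ DIM(real \<times> real)) * ennreal (rt e (e *\<^sub>R x)) = ennreal (\<rho> x)"
      by (simp add: ennreal_mult[symmetric] rt_nonneg)
  qed
  also have "\<dots> = 1" by (rule rho_nn_int)
  finally show ?thesis .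
qed

lemma rt_le: "0 < e \<Longrightarrow> (\<And>z. \<rho> z \<le> M) \<Longrightarrow> rt e y \<le> M / e\<^sup>2"
  by (simp add: rt_def divide_right_mono)


lemma int_rt_lg:
  assumes e: "0 < e" and M: "0 \<le> M" "\<And>z. \<rho> z \<le> M"
  shows "(\<integral>\<^sup>+y'. ennreal (rt e y') * ennreal (lg ((k - fst y') / e)) \<partial>lborel) \<le> ennreal M"
proof -
  have "(\<integral>\<^sup>+y'. ennreal (rt e y') * ennreal (lg ((k - fst y') / e)) \<partial>lborel)
      \<le> (\<integral>\<^sup>+y'. (ennreal (M / e\<^sup>2) * indicator {-(e/4)..e/4} (snd y')) * ennreal (lg ((k - fst y') / e)) \<partial>lborel)"
  proof (intro nn_integral_mono)
    fix y' :: "real \<times> real"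
    show "ennreal (rt e y') * ennreal (lg ((k - fst y') / e))
        \<le> (ennreal (M / e\<^sup>2) * indicator {-(e/4)..e/4} (snd y')) * ennreal (lg ((k - fst y') / e))"
    proof (cases "rt e y' = 0")
      case False
      then have "\<bar>snd y'\<bar> < e / 4" using rt_supp(2)[OF e] by blast
      then have "snd y' \<in> {-(e/4)..e/4}" by (rule abs_lt_Icc)
      moreover have "rt e y' \<le> M / e\<^sup>2" by (rule rt_le[OF e M(2)])
      ultimately show ?thesis by (auto intro!: mult_right_mono ennreal_leI)
    qed simp
  qed
  also have "\<dots> = (\<integral>\<^sup>+s. \<integral>\<^sup>+x. (ennreal (M / e\<^sup>2) * indicator {-(e/4)..e/4} x) * ennreal (lg ((k - s) / e)) \<partial>lborel \<partial>lborel)"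
  proof -
    have m1[measurable]: "(\<lambda>y'::real \<times> real. indicator {-(e/4)..e/4} (snd y') :: ennreal) \<in> borel_measurable borel"
      by (rule measurable_compose[OF snd_borel]) simp
    have m2[measurable]: "(\<lambda>y'::real \<times> real. ennreal (lg ((k - fst y') / e))) \<in> borel_measurable borel"
      by measurable
    have "(\<lambda>y'::real \<times> real. (ennreal (M / e\<^sup>2) * indicator {-(e/4)..e/4} (snd y')) * ennreal (lg ((k - fst y') / e))) \<in> borel_measurable borel"
      by measurable
    then show ?thesis by (subst nn_integral_lborel_pair) simp_all
  qed
  also have "\<dots> = (\<integral>\<^sup>+s. ennreal (M / e\<^sup>2 * (e / 2)) * ennreal (lg ((k - s) / e)) \<partial>lborel)"
  proof (intro nn_integral_cong)
    fix s
    have "(\<integral>\<^sup>+x. (ennreal (M / e\<^sup>2) * indicator {-(e/4)..e/4} x) * ennreal (lg ((k - s) / e)) \<partial>lborel)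
        = (\<integral>\<^sup>+x. ennreal (M / e\<^sup>2) * indicator {-(e/4)..e/4} x \<partial>lborel) * ennreal (lg ((k - s) / e))"
      by (rule nn_integral_multc) measurable
    also have "(\<integral>\<^sup>+x. ennreal (M / e\<^sup>2) * indicator {-(e/4)..e/4} x \<partial>lborel) = ennreal (M / e\<^sup>2) * ennreal (e / 2)"
      using e by (simp add: nn_integral_cmult_indicator)
    also have "ennreal (M / e\<^sup>2) * ennreal (e / 2) = ennreal (M / e\<^sup>2 * (e / 2))"
      using e M by (simp add: ennreal_mult[symmetric])
    finally show "(\<integral>\<^sup>+x. (ennreal (M / e\<^sup>2) * indicator {-(e/4)..e/4} x) * ennreal (lg ((k - s) / e)) \<partial>lborel)
        = ennreal (M / e\<^sup>2 * (e / 2)) * ennreal (lg ((k - s) / e))" by (simp add: mult.commute)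
  qed
  also have "\<dots> = ennreal (M / e\<^sup>2 * (e / 2)) * (\<integral>\<^sup>+s. ennreal (lg ((k - s) / e)) \<partial>lborel)"
    by (rule nn_integral_cmult) measurable
  also have "\<dots> \<le> ennreal (M / e\<^sup>2 * (e / 2)) * ennreal (2 * e)"
    by (intro mult_left_mono int_lg_shift e) simp
  also have "\<dots> = ennreal M"
    using e M by (simp add: ennreal_mult[symmetric] power2_eq_square)
  finally show ?thesis .
qed

lemma snd_small:
  assumes e: "0 < e" "e < 1" and c: "\<bar>snd c\<bar> \<le> 1/2" and "rt e y \<noteq> 0" "rt e y' \<noteq> 0"
  shows "\<bar>snd (c + y - y')\<bar> < 1"
proof -
  have "\<bar>snd y\<bar> < e / 4" "\<bar>snd y'\<bar> < e / 4" using rt_supp(2)[OF e(1)] assms by auto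
  then show ?thesis using c e by (simp add: abs_if split: if_split_asm)
qed


lemma J_case2:
  assumes e: "0 < e" "e < 1" and c: "\<bar>snd c\<bar> \<le> 1/2" and Cq: "0 \<le> Cq" and L: "1 \<le> L"
    and M: "0 \<le> M" "\<And>z. \<rho> z \<le> M"
  shows "(\<integral>\<^sup>+y. \<integral>\<^sup>+y'. ennreal (rt e y) * ennreal (rt e y')
         * (\<Sum>m\<in>{-2..2::int}. Kf L Cq (c + y - y' + (0, real_of_int m))) \<partial>lborel \<partial>lborel)
    \<le> ennreal (A0 L Cq + A1 L + (M - ln e) / (2 * pi))"
proof -
  define K' where "K' = A0 L Cq + A1 L + (- ln e) / (2 * pi)"
  have "ln e < 0" using e by simp
  then have "ln e / (2 * pi) \<le> 0" by (simp add: divide_nonpos_pos)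
  then have K': "0 \<le> K'" using A0_nonneg[of L Cq] A1_nonneg[OF L] L Cq e by (simp add: K'_def)
  define h where "h y y' = ennreal (rt e y') * (ennreal K' + ennreal (lg ((fst (c + y) - fst y') / e) / (2 * pi)))" for y y'
  have inner: "(\<integral>\<^sup>+y'. h y y' \<partial>lborel) \<le> ennreal (K' + M / (2 * pi))" for y
  proof -
    have "(\<integral>\<^sup>+y'. h y y' \<partial>lborel)
        = (\<integral>\<^sup>+y'. ennreal K' * ennreal (rt e y') + ennreal (1 / (2 * pi)) * (ennreal (rt e y') * ennreal (lg ((fst (c + y) - fst y') / e))) \<partial>lborel)"
    proof (intro nn_integral_cong)
      fix y' :: "real \<times> real"
      have "ennreal (lg ((fst (c + y) - fst y') / e) / (2 * pi)) = ennreal (1 / (2 * pi)) * ennreal (lg ((fst (c + y) - fst y') / e))"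
        by (simp add: ennreal_mult[symmetric] lg_nonneg)
      then show "h y y' = ennreal K' * ennreal (rt e y') + ennreal (1 / (2 * pi)) * (ennreal (rt e y') * ennreal (lg ((fst (c + y) - fst y') / e)))"
        by (simp add: h_def distrib_left ac_simps)
    qed
    also have "\<dots> = ennreal K' * (\<integral>\<^sup>+y'. ennreal (rt e y') \<partial>lborel)
        + ennreal (1 / (2 * pi)) * (\<integral>\<^sup>+y'. ennreal (rt e y') * ennreal (lg ((fst (c + y) - fst y') / e)) \<partial>lborel)"
      by (subst nn_integral_add) (auto simp: nn_integral_cmult)
    also have "\<dots> \<le> ennreal K' * 1 + ennreal (1 / (2 * pi)) * ennreal M"
      using rt_mass[OF e(1)] by (intro add_mono mult_left_mono int_rt_lg[OF e(1) M]) auto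
    also have "\<dots> = ennreal (K' + M / (2 * pi))"
      using K' M by (simp add: ennreal_mult[symmetric] ennreal_plus[symmetric] del: ennreal_plus)
    finally show ?thesis .
  qed
  have "(\<integral>\<^sup>+y. \<integral>\<^sup>+y'. ennreal (rt e y) * ennreal (rt e y')
         * (\<Sum>m\<in>{-2..2::int}. Kf L Cq (c + y - y' + (0, real_of_int m))) \<partial>lborel \<partial>lborel)
      \<le> (\<integral>\<^sup>+y. \<integral>\<^sup>+y'. ennreal (rt e y) * h y y' \<partial>lborel \<partial>lborel)"
  proof (rule nn_integral_mono)
    fix y
    show "(\<integral>\<^sup>+y'. ennreal (rt e y) * ennreal (rt e y')
         * (\<Sum>m\<in>{-2..2::int}. Kf L Cq (c + y - y' + (0, real_of_int m))) \<partial>lborel) \<le> (\<integral>\<^sup>+y'. ennreal (rt e y) * h y y' \<partial>lborel)"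
    proof (rule nn_integral_mono_AE)
    show "AE y' in lborel. ennreal (rt e y) * ennreal (rt e y')
         * (\<Sum>m\<in>{-2..2::int}. Kf L Cq (c + y - y' + (0, real_of_int m))) \<le> ennreal (rt e y) * h y y'"
      using AE_fst_ne[of "fst (c + y)"]
    proof eventually_elim
      case (elim y')
      show ?case
      proof (cases "rt e y = 0 \<or> rt e y' = 0")
        case True then show ?thesis by (auto simp: h_def)
      next
        case False
        have x: "\<bar>snd (c + y - y')\<bar> < 1" using snd_small[OF e c] False by blast
        have t: "fst (c + y - y') \<noteq> 0" using elim by simp
        have "(\<Sum>m\<in>{-2..2::int}. Kf L Cq (c + y - y' + (0, real_of_int m)))
            \<le> ennreal (A0 L Cq + A1 L + lg (fst (c + y - y')) / (2 * pi))"
          by (rule KB2[OF x t Cq L])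
        also have "\<dots> \<le> ennreal (K' + lg ((fst (c + y) - fst y') / e) / (2 * pi))"
        proof (rule ennreal_leI)
          have "lg (fst (c + y - y')) \<le> - ln e + lg (fst (c + y - y') / e)" by (rule lg_scale[OF e])
          then have "lg (fst (c + y - y')) / (2 * pi) \<le> (- ln e + lg (fst (c + y - y') / e)) / (2 * pi)"
            by (rule divide_right_mono) simp
          then show "A0 L Cq + A1 L + lg (fst (c + y - y')) / (2 * pi) \<le> K' + lg ((fst (c + y) - fst y') / e) / (2 * pi)"
            by (simp add: K'_def add_divide_distrib diff_divide_distrib)
        qed
        also have "\<dots> = ennreal K' + ennreal (lg ((fst (c + y) - fst y') / e) / (2 * pi))"
          using K' by (simp add: lg_nonneg)
        finally have "(\<Sum>m\<in>{-2..2::int}. Kf L Cq (c + y - y' + (0, real_of_int m)))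
            \<le> ennreal K' + ennreal (lg ((fst (c + y) - fst y') / e) / (2 * pi))" .
        then show ?thesis
          by (simp add: h_def mult.assoc mult_left_mono)
      qed
    qed
    qed
  qed
  also have "\<dots> = (\<integral>\<^sup>+y. ennreal (rt e y) * (\<integral>\<^sup>+y'. h y y' \<partial>lborel) \<partial>lborel)"
    by (intro nn_integral_cong nn_integral_cmult) (simp add: h_def)
  also have "\<dots> \<le> (\<integral>\<^sup>+y. ennreal (rt e y) * ennreal (K' + M / (2 * pi)) \<partial>lborel)"
    by (intro nn_integral_mono mult_left_mono inner) auto
  also have "\<dots> = ennreal (K' + M / (2 * pi))"
    using rt_mass[OF e(1)] by (subst nn_integral_multc) auto
  also have "K' + M / (2 * pi) = A0 L Cq + A1 L + (M - ln e) / (2 * pi)"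
    by (simp add: K'_def diff_divide_distrib)
  finally show ?thesis .
qed

lemma J_case1:
  assumes e: "0 < e" "e < 1" and c: "\<bar>snd c\<bar> \<le> 1/2" and Cq: "0 \<le> Cq" and L: "1 \<le> L"
    and b: "0 < \<beta>" and bl: "\<And>y y'. rt e y \<noteq> 0 \<Longrightarrow> rt e y' \<noteq> 0 \<Longrightarrow> \<beta> \<le> tnorm (c + y - y')"
  shows "(\<integral>\<^sup>+y. \<integral>\<^sup>+y'. ennreal (rt e y) * ennreal (rt e y')
         * (\<Sum>m\<in>{-2..2::int}. Kf L Cq (c + y - y' + (0, real_of_int m))) \<partial>lborel \<partial>lborel)
    \<le> ennreal (A0 L Cq + A1 L + max 0 ((ln 2 - 2 * ln \<beta>) / (4 * pi)))"
proof -
  define K where "K = A0 L Cq + A1 L + max 0 ((ln 2 - 2 * ln \<beta>) / (4 * pi))"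
  have "(\<integral>\<^sup>+y. \<integral>\<^sup>+y'. ennreal (rt e y) * ennreal (rt e y')
         * (\<Sum>m\<in>{-2..2::int}. Kf L Cq (c + y - y' + (0, real_of_int m))) \<partial>lborel \<partial>lborel)
      \<le> (\<integral>\<^sup>+y. \<integral>\<^sup>+y'. ennreal (rt e y) * (ennreal (rt e y') * ennreal K) \<partial>lborel \<partial>lborel)"
  proof (intro nn_integral_mono)
    fix y y'
    show "ennreal (rt e y) * ennreal (rt e y') * (\<Sum>m\<in>{-2..2::int}. Kf L Cq (c + y - y' + (0, real_of_int m)))
        \<le> ennreal (rt e y) * (ennreal (rt e y') * ennreal K)"
    proof (cases "rt e y = 0 \<or> rt e y' = 0")
      case True then show ?thesis by auto
    next
      case False
      have x: "\<bar>snd (c + y - y')\<bar> < 1" using snd_small[OF e c] False by blast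
      have "(\<Sum>m\<in>{-2..2::int}. Kf L Cq (c + y - y' + (0, real_of_int m))) \<le> ennreal K"
        unfolding K_def using False by (intro KB1[OF x b _ Cq L] bl) auto
      then show ?thesis by (simp add: mult.assoc mult_left_mono)
    qed
  qed
  also have "\<dots> = (\<integral>\<^sup>+y. ennreal (rt e y) * ennreal K \<partial>lborel)"
    using rt_mass[OF e(1)] by (intro nn_integral_cong) (simp add: nn_integral_cmult nn_integral_multc)
  also have "\<dots> = ennreal K"
    using rt_mass[OF e(1)] by (subst nn_integral_multc) auto
  finally show ?thesis by (simp add: K_def)
qed

end

lemma abs_le_Icc: "\<bar>a::real\<bar> \<le> b \<Longrightarrow> a \<in> {-b..b}"
  by (auto simp: abs_le_iff)

lemma ennreal_le_real:
  assumes "ennreal x \<le> ennreal y" "0 \<le> y" shows "x \<le> y"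
proof (cases "x \<le> 0")
  case True then show ?thesis using assms(2) by linarith
next
  case False then show ?thesis using assms by (simp add: ennreal_le_iff)
qed

context rhoL
begin

lemma qker_le:
  assumes T0: "T0 \<ge> 1" and H_range: "\<forall>t. 0 \<le> H t \<and> H t \<le> 1" and H_right: "\<forall>t\<ge>1. H t = 0"
    and a: "a \<in> SS"
  shows "qker T0 H a \<le> qt (T0 + 1) ((T0 + 1) * Ck) a"
proof -
  obtain t x where ax: "a = (t, x)" by (cases a)
  have x: "\<bar>x\<bar> \<le> 1/2" using a ax by (auto simp: SS_def)
  have qnn: "0 \<le> qt (T0 + 1) ((T0 + 1) * Ck) a" using T0 Ck_nonneg by (intro qt_nonneg) simp
  show ?thesis
  proof (cases "t \<le> 0")
    case True then show ?thesis using qnn by (simp add: ax qker_def pker_nonpos)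
  next
    case False
    show ?thesis
    proof (cases "t < T0 + 1")
      case False
      then have "H (t - T0) = 0" using H_right by simp
      then show ?thesis using qnn by (simp add: ax qker_def)
    next
      case True
      have t: "0 < t" using \<open>\<not> t \<le> 0\<close> by simp
      have "qker T0 H a = pker (t, x) * H (t - T0)" by (simp add: ax qker_def)
      also have "\<dots> \<le> pker (t, x)"
        using H_range pker_nonneg[of "(t, x)"] by (simp add: mult_left_le)
      also have "\<dots> \<le> pbold t x + t * Ck" by (rule pker_le[OF t x])
      also have "\<dots> \<le> pbold t x + (T0 + 1) * Ck" using True Ck_nonneg t by (intro add_left_mono mult_right_mono) auto
      also have "\<dots> = qt (T0 + 1) ((T0 + 1) * Ck) a"
      proof -
        have "x \<in> {-1/2..1/2}" using abs_le_Icc[OF x] by simp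
        then show ?thesis using t True by (simp add: ax qt_def)
      qed
      finally show ?thesis .
    qed
  qed
qed

lemma qker_nonneg: "\<forall>t. 0 \<le> H t \<and> H t \<le> 1 \<Longrightarrow> 0 \<le> qker T0 H a"
  by (simp add: qker_def pker_nonneg)

lemma zred_snd: "\<bar>snd (zred (z::real \<times> real))\<bar> \<le> 1/2"
  using red_ge[of "snd z"] red_lt[of "snd z"] by (simp add: zred_def abs_le_iff)

lemma tnorm_zred: "tnorm (zred z) = tnorm z"
  by (simp add: zred_def tnorm_def dT_red_red)

end

lemma key_ineq:
  fixes T e k :: real
  assumes "0 < k" "0 < e" "4 * k * e \<le> T"
  shows "(T + e) * (2 * k / (4 * k + 1)) \<le> T - 2 * k * e"
proof -
  have p: "0 < 4 * k + 1" using assms by simp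
  have "0 \<le> (2 * k + 1) * (T - 4 * k * e)" using assms by simp
  then have "(T + e) * (2 * k) \<le> (T - 2 * k * e) * (4 * k + 1)" by (simp add: algebra_simps)
  then show ?thesis using p by (simp add: field_simps)
qed


theorem lemma5p4:
  fixes T0 s0 :: real and H :: "real \<Rightarrow> real" and \<rho> :: "real \<times> real \<Rightarrow> real"
  assumes T0: "T0 \<ge> 1"
    and H_smooth: "smooth1 H"
    and H_range: "\<forall>t. 0 \<le> H t \<and> H t \<le> 1"
    and H_left: "\<forall>t\<le>0. H t = 1"
    and H_right: "\<forall>t\<ge>1. H t = 0"
    and rho_smooth: "smooth2 \<rho>"
    and rho_nonneg: "\<forall>z. 0 \<le> \<rho> z"
    and rho_sym: "\<forall>z. \<rho> (- z) = \<rho> z"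
    and rho_int: "(LINT z | lborel. \<rho> z) = 1"
    and s0: "s0 > 0"
    and rho_supp: "closure {z. \<rho> z \<noteq> 0} \<subseteq> {-s0..s0} \<times> {-1/4<..<1/4}"
  shows "\<forall>r>0. \<exists>C0. \<forall>\<epsilon> z. 0 < \<epsilon> \<and> \<epsilon> < 1 \<and> tnorm z \<le> r \<longrightarrow>
           Qeps T0 H \<rho> \<epsilon> z \<le> - (1 / (2 * pi)) * ln (tnorm z + \<epsilon>) + C0"
proof -
  have cont: "continuous_on UNIV \<rho>"
    using rho_smooth unfolding smooth2_def by (metis iter_pd_def fold_Nil id_apply)
  interpret R: rhoL \<rho> s0
    using rho_nonneg rho_supp cont rho_int s0 by unfold_locales auto
  obtain M where M: "0 \<le> M" "\<And>z. \<rho> z \<le> M" using R.rho_bdd by blast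
  define L where "L = T0 + 1"
  define Cq where "Cq = L * Ck"
  have L: "1 \<le> L" using T0 by (simp add: L_def)
  have Cq: "0 \<le> Cq" using L Ck_nonneg by (simp add: Cq_def)
  define \<kappa> where "\<kappa> = s0 + 1/4"
  have \<kappa>: "0 < \<kappa>" using s0 by (simp add: \<kappa>_def)
  define D where "D = (ln 2 - 2 * ln (2*\<kappa>/(4*\<kappa>+1))) / (4*pi)"
  have D: "0 \<le> D"
  proof -
    have "2*\<kappa>/(4*\<kappa>+1) < 1" using \<kappa> by (simp add: field_simps)
    then have "ln (2*\<kappa>/(4*\<kappa>+1)) < 0" using \<kappa> by (simp add: ln_less_zero_iff)
    moreover have "0 < ln (2::real)" by simp
    ultimately have "0 \<le> ln 2 - 2 * ln (2*\<kappa>/(4*\<kappa>+1))" by linarith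
    then show ?thesis unfolding D_def by (intro divide_nonneg_pos) auto
  qed
  show ?thesis
  proof (intro allI impI)
    fix r :: real assume r: "0 < r"
    define C1 where "C1 = A0 L Cq + A1 L + D + ln (r + 1) / (2 * pi)"
    define C2 where "C2 = A0 L Cq + A1 L + M / (2 * pi) + ln (4 * \<kappa> + 1) / (2 * pi)"
    show "\<exists>C0. \<forall>\<epsilon> z. 0 < \<epsilon> \<and> \<epsilon> < 1 \<and> tnorm z \<le> r \<longrightarrow>
           Qeps T0 H \<rho> \<epsilon> z \<le> - (1 / (2 * pi)) * ln (tnorm z + \<epsilon>) + C0"
    proof (intro exI[of _ "max C1 C2"] allI impI)
      fix e :: real and z :: "real \<times> real"
      assume h: "0 < e \<and> e < 1 \<and> tnorm z \<le> r"
      then have e: "0 < e" "e < 1" and zr: "tnorm z \<le> r" by auto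
      define c where "c = R.zred z"
      have cs: "\<bar>snd c\<bar> \<le> 1/2" unfolding c_def by (rule R.zred_snd)
      define J where "J = (\<integral>\<^sup>+y. \<integral>\<^sup>+y'. ennreal (R.rt e y) * ennreal (R.rt e y')
         * (\<Sum>m\<in>{-2..2::int}. Kf L Cq (c + y - y' + (0, real_of_int m))) \<partial>lborel \<partial>lborel)"
      have fle: "qker T0 H a \<le> qt L Cq a" if "a \<in> R.SS" for a
        unfolding L_def Cq_def by (rule R.qker_le[OF T0 H_range H_right that])
      have QJ: "ennreal (Qeps T0 H \<rho> e z) \<le> J"
      proof -
        have "ennreal (Qeps T0 H \<rho> e z)
            \<le> (\<integral>\<^sup>+w. indicator R.SS w * R.VV L Cq e w * R.VV L Cq e (z + w) \<partial>lborel)"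
          unfolding Qeps_def
          by (rule R.Qeps_le_V[OF e _ fle Cq]) (rule R.qker_nonneg[OF H_range])
        also have "\<dots> = (\<integral>\<^sup>+w. indicator R.SS w * R.VV L Cq e w * R.VV L Cq e (c + w) \<partial>lborel)"
          unfolding c_def by (intro nn_integral_cong) (simp only: R.VV_zred[where z=z])
        also have "\<dots> = (\<integral>\<^sup>+a. \<integral>\<^sup>+b. (indicator R.SS a * ennreal (qt L Cq a)) * (indicator R.SS b * ennreal (qt L Cq b))
         * (\<integral>\<^sup>+w. indicator R.SS w * ennreal (R.RR e (w - a)) * ennreal (R.RR e (c + w - b)) \<partial>lborel) \<partial>lborel \<partial>lborel)"
          by (rule R.tonelli_V[OF Cq])
        also have "\<dots> \<le> J" unfolding J_def by (rule R.main_chain[OF e cs Cq])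
        finally show ?thesis .
      qed
      define T where "T = tnorm z"
      have T0': "0 \<le> T" by (simp add: T_def tnorm_nonneg)
      have Te: "0 < T + e" using T0' e by simp
      show "Qeps T0 H \<rho> e z \<le> - (1 / (2 * pi)) * ln (tnorm z + e) + max C1 C2"
      proof (cases "T < 4 * \<kappa> * e")
        case True
        have Jb: "J \<le> ennreal (A0 L Cq + A1 L + (M - ln e) / (2 * pi))"
          unfolding J_def by (rule R.J_case2[OF e cs Cq L M])
        have B0:  "0 \<le> A0 L Cq + A1 L + (M - ln e) / (2 * pi)"
        proof -
          have "ln e < 0" using e by simp
          then have "0 \<le> (M - ln e) / (2 * pi)" using M by (intro divide_nonneg_pos) auto
          then show ?thesis using A0_nonneg[of L Cq] A1_nonneg[OF L] L Cq by simp
        qed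
        have Q: "Qeps T0 H \<rho> e z \<le> A0 L Cq + A1 L + (M - ln e) / (2 * pi)"
          by (rule ennreal_le_real[OF order_trans[OF QJ Jb] B0])
        have "T + e \<le> (4 * \<kappa> + 1) * e" using True by (simp add: algebra_simps)
        then have "ln (T + e) \<le> ln ((4 * \<kappa> + 1) * e)" using Te by (subst ln_le_cancel_iff) auto
        also have "\<dots> = ln (4 * \<kappa> + 1) + ln e" using \<kappa> e by (simp add: ln_mult)
        finally have "- ln e \<le> ln (4 * \<kappa> + 1) - ln (T + e)" by simp
        then have "(M - ln e) / (2 * pi) \<le> (M + ln (4 * \<kappa> + 1) - ln (T + e)) / (2 * pi)"
          by (intro divide_right_mono) auto
        then have "A0 L Cq + A1 L + (M - ln e) / (2 * pi) \<le> - (1 / (2 * pi)) * ln (T + e) + C2"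
          by (simp add: C2_def add_divide_distrib diff_divide_distrib)
        also have "\<dots> \<le> - (1 / (2 * pi)) * ln (T + e) + max C1 C2" by simp
        finally show ?thesis using Q by (simp add: T_def)
      next
        case False
        define \<beta> where "\<beta> = (T + e) * (2 * \<kappa> / (4 * \<kappa> + 1))"
        have b: "0 < \<beta>" using Te \<kappa> by (simp add: \<beta>_def)
        have small: "tnorm y \<le> \<kappa> * e" if "R.rt e y \<noteq> 0" for y
        proof -
          have "\<bar>fst y\<bar> \<le> s0 * e" "\<bar>snd y\<bar> < e / 4" using R.rt_supp[OF e(1) that] by auto
          then show ?thesis using dT_le_abs[of "snd y"] by (simp add: tnorm_def \<kappa>_def algebra_simps)
        qed
        have bl: "\<beta> \<le> tnorm (c + y - y')" if "R.rt e y \<noteq> 0" "R.rt e y' \<noteq> 0" for y y'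
        proof -
          have "tnorm c = tnorm ((c + y - y') + (- y) + y')" by simp
          also have "\<dots> \<le> tnorm ((c + y - y') + (- y)) + tnorm y'" by (rule tnorm_add)
          also have "\<dots> \<le> tnorm (c + y - y') + tnorm (- y) + tnorm y'" by (intro add_right_mono tnorm_add)
          finally have "tnorm c \<le> tnorm (c + y - y') + tnorm (- y) + tnorm y'" .
          then have "T \<le> tnorm (c + y - y') + \<kappa> * e + \<kappa> * e"
            using small[OF that(1)] small[OF that(2)] by (simp add: tnorm_minus c_def R.tnorm_zred T_def)
          moreover have "\<beta> \<le> T - 2 * \<kappa> * e"
            unfolding \<beta>_def using False \<kappa> e by (intro key_ineq) auto
          ultimately show ?thesis by simp
        qed
        have Jb: "J \<le> ennreal (A0 L Cq + A1 L + max 0 ((ln 2 - 2 * ln \<beta>) / (4 * pi)))"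
          unfolding J_def by (rule R.J_case1[OF e cs Cq L b bl])
        have B0: "0 \<le> A0 L Cq + A1 L + max 0 ((ln 2 - 2 * ln \<beta>) / (4 * pi))"
          using A0_nonneg[of L Cq] A1_nonneg[OF L] L Cq by simp
        have Q: "Qeps T0 H \<rho> e z \<le> A0 L Cq + A1 L + max 0 ((ln 2 - 2 * ln \<beta>) / (4 * pi))"
          by (rule ennreal_le_real[OF order_trans[OF QJ Jb] B0])
        have lnb: "ln \<beta> = ln (T + e) + ln (2 * \<kappa> / (4 * \<kappa> + 1))"
          unfolding \<beta>_def using Te \<kappa> by (intro ln_mult_pos) auto
        have X: "(ln 2 - 2 * ln \<beta>) / (4 * pi) = D - ln (T + e) / (2 * pi)"
          by (simp add: lnb D_def field_simps)
        have "ln (T + e) \<le> ln (r + 1)" using Te zr e by (simp add: T_def)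
        then have "ln (T + e) / (2 * pi) \<le> ln (r + 1) / (2 * pi)" by (intro divide_right_mono) auto
        then have "max 0 ((ln 2 - 2 * ln \<beta>) / (4 * pi)) \<le> D - ln (T + e) / (2 * pi) + ln (r + 1) / (2 * pi)"
        proof -
          have "0 \<le> ln (r + 1) / (2 * pi)" using r by simp
          then show ?thesis using D \<open>ln (T + e) / (2 * pi) \<le> ln (r + 1) / (2 * pi)\<close>
            unfolding X by (auto simp: max_def)
        qed
        then have "A0 L Cq + A1 L + max 0 ((ln 2 - 2 * ln \<beta>) / (4 * pi)) \<le> - (1 / (2 * pi)) * ln (T + e) + C1"
          by (simp add: C1_def)
        also have "\<dots> \<le> - (1 / (2 * pi)) * ln (T + e) + max C1 C2" by simp
        finally show ?thesis using Q by (simp add: T_def)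
      qed
    qed
  qed
qed

end
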